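(* For any strictly feasible starting point $z^0\in F$ and any $\mu>0$, $\varepsilon>0$, Algorithm IP-FB$(z^0,\mu,\varepsilon)$ (described in the context) terminates after finitely many iterations and returns a point $z^\star$ that is $\varepsilon$-stationary for $q_\mu$, i.e. $\operatorname{dist}(0,\hat\partial q_\mu(z^\star))\leq\varepsilon$, and satisfies $q_\mu(z^\star)\leq q_\mu(z^0)$.
   Context: Setting: $f:\mathbb{R}^n\to\mathbb{R}$ has locally Lipschitz continuous gradient; $g:\mathbb{R}^n\to\mathbb{R}\cup\{\infty\}$ is proper, lower semicontinuous, prox-bounded ($g+\frac{1}{2\gamma}\|\cdot\|^2$ bounded below for some $\gamma>0$; $\gamma_g\in(0,\infty]$ denotes the supremum of such $\gamma$), and continuous relative to $\operatorname{dom} g$ (whenever $\operatorname{dom} g\ni x^k\to x$, $g(x^k)\to g(x)$); $c:\mathbb{R}^n\to\mathbb{R}^m$ has locally Lipschitz continuous Jacobian. $q=f+g$, $\inf\{q(x): c(x)\le0\}\in\mathbb{R}$, $D=\{x: c(x)<0\}$, $F=\operatorname{dom} q\cap D\neq\emptyset$. The barrier $b:\mathbb{R}\to[0,\infty]$ has $\operatorname{dom} b=(-\infty,0)$, is twice continuously differentiable with $b'>0$ there, and $b(t)\to\infty$ as $t\to0^-$. For $\mu>0$: $f_\mu(z)=f(z)+\mu\sum_{i=1}^m b(c_i(z))$ ($=\infty$ outside $D$), $q_\mu=f_\mu+g$. $\hat\partial$ denotes the regular (Fréchet) subdifferential. $\operatorname{prox}_{\gamma g}(x)=\operatorname{argmin}_w\{g(w)+\frac{1}{2\gamma}\|w-x\|^2\}$,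 and $T_{\mu,\gamma}(z)=\operatorname{prox}_{\gamma g}(z-\gamma\nabla f_\mu(z))$ for $z\in D$. Algorithm IP-FB$(z^0,\mu,\varepsilon)$: inputs $z^0\in F$, $\mu>0$, $\varepsilon>0$; parameters $\gamma_0\in(0,\gamma_g)$, $\alpha,\beta\in(0,1)$. Set $j=0$ and start at step 2. Step 1 (only for $j\geq1$): set $\gamma_j\gets\gamma_{j-1}$ and $z^j\gets\bar z^{j-1}$. Step 2: compute some $\bar z^j\in T_{\mu,\gamma_j}(z^j)$. Step 3: if not all of the following hold: (a) $c(\bar z^j)<0$, (b) $q_\mu(\bar z^j)\leq q_\mu(z^j)-\frac{1-\alpha}{2\gamma_j}\|\bar z^j-z^j\|^2$, (c) $\|\nabla f_\mu(\bar z^j)-\nabla f_\mu(z^j)\|\leq\frac{\alpha}{\gamma_j}\|\bar z^j-z^j\|$, then set $\gamma_j\gets\beta\gamma_j$ and go back to Step 2. Step 4: if $\|\frac{1}{\gamma_j}(z^j-\bar z^j)-\nabla f_\mu(z^j)+\nabla f_\mu(\bar z^j)\|\leq\varepsilon$, return $\bar z^j$. Step 5: set $j\gets j+1$ and go to Step 1. *)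

theory Defs
  imports "HOL-Analysis.Analysis"
begin

definition locally_lipschitz :: "('a::metric_space \<Rightarrow> 'b::metric_space) \<Rightarrow> bool" where
  "locally_lipschitz F \<longleftrightarrow> (\<forall>x. \<exists>e>0. \<exists>L. L-lipschitz_on (ball x e) F)"

definition lsc :: "('a::metric_space \<Rightarrow> ereal) \<Rightarrow> bool" where
  "lsc g \<longleftrightarrow> (\<forall>x xs. xs \<longlonglongrightarrow> x \<longrightarrow> g x \<le> liminf (\<lambda>k. g (xs k)))"

definition edom :: "('a \<Rightarrow> ereal) \<Rightarrow> 'a set" where
  "edom g = {x. g x < \<infinity>}"

definition cont_rel_dom :: "('a::metric_space \<Rightarrow> ereal) \<Rightarrow> bool" where
  "cont_rel_dom g \<longleftrightarrow> (\<forall>x xs. (\<forall>k. xs k \<in> edom g) \<and> xs \<longlonglongrightarrow> x \<longrightarrow> (\<lambda>k. g (xs k)) \<longlonglongrightarrow> g x)"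

definition prox_bdd_set :: "('a::real_normed_vector \<Rightarrow> ereal) \<Rightarrow> real set" where
  "prox_bdd_set g = {\<gamma>. \<gamma> > 0 \<and> (\<exists>B::real. \<forall>x. ereal B \<le> g x + ereal (norm x ^ 2 / (2 * \<gamma>)))}"

definition prox_bounded :: "('a::real_normed_vector \<Rightarrow> ereal) \<Rightarrow> bool" where
  "prox_bounded g \<longleftrightarrow> prox_bdd_set g \<noteq> {}"

definition gamma_g :: "('a::real_normed_vector \<Rightarrow> ereal) \<Rightarrow> ereal" where
  "gamma_g g = Sup (ereal ` prox_bdd_set g)"

definition prox :: "('a::real_normed_vector \<Rightarrow> ereal) \<Rightarrow> real \<Rightarrow> 'a \<Rightarrow> 'a set" where
  "prox g \<gamma> x = {w. \<forall>u. g w + ereal (norm (w - x) ^ 2 / (2 * \<gamma>)) \<le> g u + ereal (norm (u - x) ^ 2 / (2 * \<gamma>))}"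

text \<open>Regular (Frechet) subdifferential:
  v is in it iff h z is finite and liminf_{w \<rightarrow> z, w \<noteq> z} (h w - h z - <v, w - z>) / |w - z| \<ge> 0,
  written out in epsilon-delta form.\<close>
definition frechet_subdiff :: "('a::real_inner \<Rightarrow> ereal) \<Rightarrow> 'a \<Rightarrow> 'a set" where
  "frechet_subdiff h z = {v. \<bar>h z\<bar> \<noteq> \<infinity> \<and>
     (\<forall>e>0. \<exists>\<delta>>0. \<forall>w. norm (w - z) < \<delta> \<longrightarrow>
        h z + ereal (inner v (w - z) - e * norm (w - z)) \<le> h w)}"

definition fmu :: "('a \<Rightarrow> real) \<Rightarrow> (nat \<Rightarrow> 'a \<Rightarrow> real) \<Rightarrow> nat \<Rightarrow> (real \<Rightarrow> real) \<Rightarrow> real \<Rightarrow> 'a \<Rightarrow> ereal" where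
  "fmu f c m b \<mu> z = (if \<forall>i<m. c i z < 0 then ereal (f z + \<mu> * (\<Sum>i<m. b (c i z))) else \<infinity>)"

text \<open>Gradient of f_mu on D (chain rule), given gradients df of f, dc i of c i, and db = b'.\<close>
definition grad_fmu :: "('a \<Rightarrow> 'a::real_vector) \<Rightarrow> (nat \<Rightarrow> 'a \<Rightarrow> real) \<Rightarrow> (nat \<Rightarrow> 'a \<Rightarrow> 'a) \<Rightarrow> nat \<Rightarrow> (real \<Rightarrow> real) \<Rightarrow> real \<Rightarrow> 'a \<Rightarrow> 'a" where
  "grad_fmu df c dc m db \<mu> z = df z + \<mu> *\<^sub>R (\<Sum>i<m. db (c i z) *\<^sub>R dc i z)"

definition qmu :: "('a \<Rightarrow> real) \<Rightarrow> ('a \<Rightarrow> ereal) \<Rightarrow> (nat \<Rightarrow> 'a \<Rightarrow> real) \<Rightarrow> nat \<Rightarrow> (real \<Rightarrow> real) \<Rightarrow> real \<Rightarrow> 'a \<Rightarrow> ereal" where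
  "qmu f g c m b \<mu> z = fmu f c m b \<mu> z + g z"

definition Tmu :: "('a \<Rightarrow> 'a::real_normed_vector) \<Rightarrow> ('a \<Rightarrow> ereal) \<Rightarrow> (nat \<Rightarrow> 'a \<Rightarrow> real) \<Rightarrow> (nat \<Rightarrow> 'a \<Rightarrow> 'a) \<Rightarrow> nat \<Rightarrow> (real \<Rightarrow> real) \<Rightarrow> real \<Rightarrow> real \<Rightarrow> 'a \<Rightarrow> 'a set" where
  "Tmu df g c dc m db \<mu> \<gamma> z = prox g \<gamma> (z - \<gamma> *\<^sub>R grad_fmu df c dc m db \<mu> z)"

text \<open>States: Cont gamma z = about to execute Step 2 with current stepsize gamma and iterate z;
  Ret z = the algorithm has returned z.\<close>
datatype 'a ipfb_state = Cont real 'a | Ret 'a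

definition ipfb_accept :: "('a \<Rightarrow> real) \<Rightarrow> ('a \<Rightarrow> 'a::real_normed_vector) \<Rightarrow> ('a \<Rightarrow> ereal) \<Rightarrow> (nat \<Rightarrow> 'a \<Rightarrow> real) \<Rightarrow> (nat \<Rightarrow> 'a \<Rightarrow> 'a) \<Rightarrow> nat \<Rightarrow> (real \<Rightarrow> real) \<Rightarrow> (real \<Rightarrow> real) \<Rightarrow> real \<Rightarrow> real \<Rightarrow> real \<Rightarrow> 'a \<Rightarrow> 'a \<Rightarrow> bool" where
  "ipfb_accept f df g c dc m b db \<mu> \<alpha> \<gamma> z zb \<longleftrightarrow>
     (\<forall>i<m. c i zb < 0) \<and>
     qmu f g c m b \<mu> zb \<le> qmu f g c m b \<mu> z - ereal ((1 - \<alpha>) / (2 * \<gamma>) * norm (zb - z) ^ 2) \<and>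
     norm (grad_fmu df c dc m db \<mu> zb - grad_fmu df c dc m db \<mu> z) \<le> \<alpha> / \<gamma> * norm (zb - z)"

definition ipfb_residual :: "('a \<Rightarrow> 'a::real_normed_vector) \<Rightarrow> (nat \<Rightarrow> 'a \<Rightarrow> real) \<Rightarrow> (nat \<Rightarrow> 'a \<Rightarrow> 'a) \<Rightarrow> nat \<Rightarrow> (real \<Rightarrow> real) \<Rightarrow> real \<Rightarrow> real \<Rightarrow> 'a \<Rightarrow> 'a \<Rightarrow> real" where
  "ipfb_residual df c dc m db \<mu> \<gamma> z zb =
     norm ((1 / \<gamma>) *\<^sub>R (z - zb) - grad_fmu df c dc m db \<mu> z + grad_fmu df c dc m db \<mu> zb)"

text \<open>One pass through Steps 2--5: pick some zb in T(z) (Step 2); on rejection shrink gamma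
  and redo Step 2 (Step 3); on acceptance either return zb (Step 4) or continue with
  z := zb and the same gamma (Steps 5, 1).\<close>
inductive ipfb_step :: "('a \<Rightarrow> real) \<Rightarrow> ('a \<Rightarrow> 'a::real_normed_vector) \<Rightarrow> ('a \<Rightarrow> ereal) \<Rightarrow> (nat \<Rightarrow> 'a \<Rightarrow> real) \<Rightarrow> (nat \<Rightarrow> 'a \<Rightarrow> 'a) \<Rightarrow> nat \<Rightarrow> (real \<Rightarrow> real) \<Rightarrow> (real \<Rightarrow> real) \<Rightarrow> real \<Rightarrow> real \<Rightarrow> real \<Rightarrow> real \<Rightarrow> 'a ipfb_state \<Rightarrow> 'a ipfb_state \<Rightarrow> bool"
  for f df g c dc m b db \<mu> \<epsilon> \<alpha> \<beta> where
  backtrack: "zb \<in> Tmu df g c dc m db \<mu> \<gamma> z \<Longrightarrow> \<not> ipfb_accept f df g c dc m b db \<mu> \<alpha> \<gamma> z zb \<Longrightarrow>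
     ipfb_step f df g c dc m b db \<mu> \<epsilon> \<alpha> \<beta> (Cont \<gamma> z) (Cont (\<beta> * \<gamma>) z)"
| return: "zb \<in> Tmu df g c dc m db \<mu> \<gamma> z \<Longrightarrow> ipfb_accept f df g c dc m b db \<mu> \<alpha> \<gamma> z zb \<Longrightarrow>
     ipfb_residual df c dc m db \<mu> \<gamma> z zb \<le> \<epsilon> \<Longrightarrow>
     ipfb_step f df g c dc m b db \<mu> \<epsilon> \<alpha> \<beta> (Cont \<gamma> z) (Ret zb)"
| continue: "zb \<in> Tmu df g c dc m db \<mu> \<gamma> z \<Longrightarrow> ipfb_accept f df g c dc m b db \<mu> \<alpha> \<gamma> z zb \<Longrightarrow>
     \<not> ipfb_residual df c dc m db \<mu> \<gamma> z zb \<le> \<epsilon> \<Longrightarrow>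
     ipfb_step f df g c dc m b db \<mu> \<epsilon> \<alpha> \<beta> (Cont \<gamma> z) (Cont \<gamma> zb)"

end

theory Submission
  imports Defs
begin

lemma descent_lemma:
  fixes \<phi> :: "'a::real_inner \<Rightarrow> real"
  assumes S: "convex S" and zS: "z \<in> S" and wS: "w \<in> S"
    and der: "\<And>y. y \<in> S \<Longrightarrow> (\<phi> has_derivative (\<lambda>h. inner (G y) h)) (at y)"
    and lip: "\<And>y y'. y \<in> S \<Longrightarrow> y' \<in> S \<Longrightarrow> norm (G y - G y') \<le> L * norm (y - y')"
  shows "\<phi> w \<le> \<phi> z + inner (G z) (w - z) + L / 2 * norm (w - z) ^ 2"
proof -
  define d where "d = w - z"
  define p where "p = (\<lambda>t::real. z + t *\<^sub>R d)"
  define h where "h = (\<lambda>t. \<phi> (p t) - t * inner (G z) d - L / 2 * t^2 * norm d ^ 2)"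
  have pS: "p t \<in> S" if "0 \<le> t" "t \<le> 1" for t
  proof -
    have "p t = (1 - t) *\<^sub>R z + t *\<^sub>R w" by (simp add: p_def d_def algebra_simps)
    thus ?thesis using S zS wS that by (simp add: convex_alt)
  qed
  have "h 1 \<le> h 0"
  proof (rule DERIV_nonpos_imp_nonincreasing[of 0 1 h])
    fix t :: real assume t: "0 \<le> t" "t \<le> 1"
    have dp: "(p has_derivative (\<lambda>s. s *\<^sub>R d)) (at t)"
      unfolding p_def by (auto intro!: derivative_eq_intros)
    have d1: "((\<lambda>t. \<phi> (p t)) has_derivative (\<lambda>s. inner (G (p t)) (s *\<^sub>R d))) (at t)"
      using has_derivative_compose[OF dp der[OF pS[OF t]]] by (simp add: o_def)
    have "(h has_derivative (\<lambda>s. inner (G (p t)) (s *\<^sub>R d) - s * inner (G z) d - L / 2 * (2 * t * s) * norm d ^ 2)) (at t)"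
      unfolding h_def
      by (rule derivative_eq_intros d1 refl | simp)+ (simp add: fun_eq_iff algebra_simps)
    hence "DERIV h t :> (inner (G (p t)) d - inner (G z) d - L * t * norm d ^ 2)"
      unfolding has_field_derivative_def
      by (rule has_derivative_eq_rhs) (simp add: fun_eq_iff algebra_simps)
    moreover have "inner (G (p t)) d - inner (G z) d - L * t * norm d ^ 2 \<le> 0"
    proof -
      have "inner (G (p t)) d - inner (G z) d = inner (G (p t) - G z) d" by (simp add: inner_diff_left)
      also have "\<dots> \<le> norm (G (p t) - G z) * norm d" by (rule norm_cauchy_schwarz)
      also have "\<dots> \<le> L * norm (p t - z) * norm d"
        by (rule mult_right_mono[OF lip[OF pS[OF t] zS]]) simp
      also have "\<dots> = L * t * norm d ^ 2" using t by (simp add: p_def power2_eq_square)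
      finally show ?thesis by simp
    qed
    ultimately show "\<exists>y. DERIV h t :> y \<and> y \<le> 0" by blast
  qed simp
  thus ?thesis by (simp add: h_def p_def d_def algebra_simps)
qed

lemma quad_bound_gen:
  fixes a X N B H \<gamma> \<gamma>' :: real
  assumes g: "0 < \<gamma>" "\<gamma> < \<gamma>'" and a: "0 \<le> a" and X: "0 \<le> X" and N: "0 \<le> N" "N \<le> a + X"
    and H: "B - N^2 / (2*\<gamma>') + a^2 / (2*\<gamma>) \<le> H"
  shows "a^2 * ((\<gamma>' - \<gamma>) / (4*\<gamma>*\<gamma>')) \<le> H - B + (1 + 2*\<gamma>/(\<gamma>' - \<gamma>)) * X^2 / (2*\<gamma>')"
proof -
  define sv where "sv = (\<gamma>' - \<gamma>) / (2*\<gamma>)"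
  have sv: "sv > 0" using g by (simp add: sv_def)
  have "0 \<le> (sv*a - X)^2" by simp
  hence "2 * sv * a * X \<le> sv^2*a^2 + X^2" by (simp add: power2_eq_square algebra_simps)
  hence "(2 * sv * a * X)/sv \<le> (sv^2*a^2 + X^2)/sv" using sv by (intro divide_right_mono) auto
  moreover have "(2 * sv * a * X)/sv = 2*a*X" using sv by simp
  moreover have "(sv^2*a^2 + X^2)/sv = sv*a^2 + X^2/sv" using sv by (simp add: add_divide_distrib power2_eq_square)
  ultimately have ax: "2*a*X \<le> sv*a^2 + X^2/sv" by simp
  moreover have "N^2 \<le> (a+X)^2" using N by (simp add: power_mono)
  ultimately have N2: "N^2 \<le> (1+sv)*a^2 + (1 + 1/sv)*X^2" by (simp add: power2_eq_square algebra_simps)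
  have "N^2/(2*\<gamma>') \<le> ((1+sv)*a^2 + (1 + 1/sv)*X^2)/(2*\<gamma>')"
    using N2 g by (simp add: divide_right_mono)
  hence 1: "a^2/(2*\<gamma>) - ((1+sv)*a^2 + (1 + 1/sv)*X^2)/(2*\<gamma>') \<le> H - B" using H by linarith
  have e0: "((1+sv)*a^2 + (1 + 1/sv)*X^2)/(2*\<gamma>') = (1+sv)*a^2/(2*\<gamma>') + (1 + 1/sv)*X^2/(2*\<gamma>')"
    by (simp add: add_divide_distrib)
  have e1: "a^2/(2*\<gamma>) - (1+sv)*a^2/(2*\<gamma>') = a^2 * ((\<gamma>' - \<gamma>) / (4*\<gamma>*\<gamma>'))"
    using g unfolding sv_def by (simp add: field_simps)
  have e2: "1/sv = 2*\<gamma>/(\<gamma>' - \<gamma>)" by (simp add: sv_def)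
  have e3: "(1 + 1/sv) * X^2/(2*\<gamma>') = (1 + 2*\<gamma>/(\<gamma>' - \<gamma>)) * X^2/(2*\<gamma>')" using e2 by simp
  show ?thesis using 1 e0 e1 e3 by linarith
qed

lemma quad_bound_small:
  fixes a X N B H \<gamma> \<gamma>' :: real
  assumes g: "0 < \<gamma>" "4*\<gamma> \<le> \<gamma>'" and a: "0 \<le> a" and X: "0 \<le> X" and N: "0 \<le> N" "N \<le> a + X"
    and H: "B - N^2 / (2*\<gamma>') + a^2 / (2*\<gamma>) \<le> H"
  shows "a^2 \<le> 4 * \<gamma> * (H - B + X^2 / \<gamma>')"
proof -
  have "N^2 \<le> (a+X)^2" using N by (simp add: power_mono)
  also have "\<dots> \<le> 2*a^2 + 2*X^2"
  proof -
    have "0 \<le> (a - X)^2" by simp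
    thus ?thesis by (simp add: power2_eq_square algebra_simps)
  qed
  finally have N2: "N^2 \<le> 2*a^2 + 2*X^2" .
  have gp: "\<gamma>' > 0" using g by simp
  have "N^2/(2*\<gamma>') \<le> (2*a^2 + 2*X^2)/(2*\<gamma>')"
    using N2 gp by (simp add: divide_right_mono)
  also have "\<dots> = a^2/\<gamma>' + X^2/\<gamma>'" by (simp add: add_divide_distrib)
  finally have 1: "a^2/(2*\<gamma>) - a^2/\<gamma>' - X^2/\<gamma>' \<le> H - B" using H by linarith
  have "a^2/\<gamma>' \<le> a^2/(4*\<gamma>)" using g by (simp add: frac_le)
  moreover have "a^2/(2*\<gamma>) = 2 * (a^2/(4*\<gamma>))" by simp
  ultimately have "a^2/(4*\<gamma>) \<le> H - B + X^2/\<gamma>'" using 1 by linarith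
  hence "4*\<gamma> * (a^2/(4*\<gamma>)) \<le> 4*\<gamma> * (H - B + X^2/\<gamma>')" using g by (intro mult_left_mono) auto
  moreover have "4*\<gamma> * (a^2/(4*\<gamma>)) = a^2" using g by simp
  ultimately show ?thesis by simp
qed

lemma ereal_split:
  assumes "(a::ereal) \<noteq> \<infinity>" "a \<noteq> -\<infinity>"
  obtains r where "a = ereal r"
  using assms by (cases a) auto

lemma prox_nonempty:
  fixes g :: "'a::euclidean_space \<Rightarrow> ereal"
  assumes lsc: "lsc g" and ninf: "\<And>x. g x \<noteq> -\<infinity>" and gprop: "\<exists>x. g x \<noteq> \<infinity>"
    and gp: "\<gamma>' \<in> prox_bdd_set g" and \<gamma>: "0 < \<gamma>" "\<gamma> < \<gamma>'"
  shows "prox g \<gamma> x \<noteq> {}"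
proof -
  obtain B where B: "\<And>y. ereal B \<le> g y + ereal (norm y ^ 2 / (2*\<gamma>'))"
    using gp unfolding prox_bdd_set_def by auto
  define q where "q = (\<lambda>w. norm (w - x)^2 / (2*\<gamma>))"
  have q0: "q w \<ge> 0" for w using \<gamma> by (simp add: q_def)
  define h where "h = (\<lambda>w. g w + ereal (q w))"
  obtain w0 where w0: "g w0 \<noteq> \<infinity>" using gprop by auto
  define H0 where "H0 = real_of_ereal (g w0) + q w0"
  have hw0: "h w0 = ereal H0" using w0 ninf[of w0] by (cases "g w0") (auto simp: h_def H0_def)
  define K where "K = H0 - B + (1 + 2*\<gamma>/(\<gamma>' - \<gamma>)) * norm x^2 / (2*\<gamma>')"
  define \<sigma> where "\<sigma> = (\<gamma>' - \<gamma>) / (4*\<gamma>*\<gamma>')"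
  have \<sigma>: "\<sigma> > 0" using \<gamma> by (simp add: \<sigma>_def)
  define R where "R = max 1 (K/\<sigma>)"
  have sub: "norm (w - x) \<le> R" if "h w \<le> ereal H0" for w
  proof -
    have gfin: "g w \<noteq> \<infinity>" using that by (auto simp: h_def)
    obtain G where gG: "g w = ereal G" using gfin ninf[of w] by (rule ereal_split)
    have 1: "G + q w \<le> H0" using that by (simp add: h_def gG)
    have 2: "B \<le> G + norm w ^2/(2*\<gamma>')" using B[of w] by (simp add: gG)
    have nw: "norm w \<le> norm (w - x) + norm x" using norm_triangle_ineq[of "w - x" x] by simp
    have "norm (w-x)^2 * \<sigma> \<le> K"
      unfolding \<sigma>_def K_def
      by (rule quad_bound_gen[OF \<gamma> norm_ge_zero norm_ge_zero norm_ge_zero nw]) (use 1 2 in \<open>simp add: q_def\<close>)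
    hence a2: "norm (w-x)^2 \<le> K/\<sigma>" using \<sigma> by (simp add: field_simps)
    show ?thesis
    proof (cases "norm (w - x) \<le> 1")
      case True thus ?thesis by (simp add: R_def)
    next
      case False
      hence "norm (w - x) * 1 \<le> norm (w - x) * norm (w - x)" by (intro mult_left_mono) auto
      hence "norm (w - x) \<le> norm (w - x)^2" by (simp add: power2_eq_square)
      thus ?thesis using a2 by (simp add: R_def)
    qed
  qed
  define Lb where "Lb = min H0 (B - (norm x + R)^2/(2*\<gamma>'))"
  have lb: "ereal Lb \<le> h w" for w
  proof (cases "h w \<le> ereal H0")
    case True
    hence n1: "norm (w - x) \<le> R" by (rule sub)
    have "norm w \<le> norm (w - x) + norm x" using norm_triangle_ineq[of "w - x" x] by simp
    hence nw: "norm w \<le> norm x + R" using n1 by simp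
    have gfin: "g w \<noteq> \<infinity>" using True by (auto simp: h_def)
    obtain G where gG: "g w = ereal G" using gfin ninf[of w] by (rule ereal_split)
    have 2: "B \<le> G + norm w ^2/(2*\<gamma>')" using B[of w] by (simp add: gG)
    have "norm w ^ 2 \<le> (norm x + R)^2" using nw by (simp add: power_mono)
    hence "norm w ^2/(2*\<gamma>') \<le> (norm x + R)^2/(2*\<gamma>')" using \<gamma> by (simp add: divide_right_mono)
    hence "B - (norm x + R)^2/(2*\<gamma>') \<le> G + q w" using 2 q0[of w] by linarith
    hence "Lb \<le> G + q w" by (simp add: Lb_def)
    thus ?thesis by (simp add: h_def gG)
  next
    case False thus ?thesis by (simp add: Lb_def) (meson less_eq_ereal_def linorder_le_cases order_trans min.cobounded1 ereal_less_eq(3))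
  qed
  define m where "m = (INF w. h w)"
  have m_le: "m \<le> h u" for u by (simp add: m_def INF_lower)
  have m_ge: "ereal Lb \<le> m" unfolding m_def by (rule INF_greatest) (rule lb)
  have "m \<le> ereal H0" using m_le[of w0] hw0 by simp
  then obtain mr where mr: "m = ereal mr" using m_ge by (cases m) auto
  have "\<exists>w. h w < ereal (mr + inverse (real (Suc n)))" for n
  proof -
    have "m < ereal (mr + inverse (real (Suc n)))" using mr by simp
    thus ?thesis unfolding m_def by (simp add: INF_less_iff)
  qed
  then obtain w where w: "\<And>n. h (w n) < ereal (mr + inverse (real (Suc n)))" by metis
  define u where "u n = (if h (w n) \<le> ereal H0 then w n else w0)" for n
  have u1: "h (u n) \<le> ereal H0" for n using hw0 by (simp add: u_def)
  have u2: "h (u n) < ereal (mr + inverse (real (Suc n)))" for n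
  proof (cases "h (w n) \<le> ereal H0")
    case True thus ?thesis using w by (simp add: u_def)
  next
    case False
    hence "h (u n) < h (w n)" using hw0 by (simp add: u_def)
    thus ?thesis using w[of n] by simp
  qed
  have "range u \<subseteq> cball x R"
    using sub[OF u1] by (auto simp: dist_norm norm_minus_commute)
  hence "bounded (range u)" using bounded_cball bounded_subset by blast
  then obtain l r where r: "strict_mono r" and lim: "(u \<circ> r) \<longlonglongrightarrow> l"
    using bounded_imp_convergent_subsequence by blast
  have key: "g l \<le> ereal (mr - q l + e)" if e: "e > 0" for e
  proof -
    have "g l \<le> liminf (\<lambda>k. g ((u \<circ> r) k))" using lsc lim unfolding lsc_def by blast
    also have "\<dots> \<le> ereal (mr - q l + e)"
    proof (rule Liminf_le)
      show "sequentially \<noteq> bot" by simp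
      have i0: "(\<lambda>k. inverse (real (Suc (r k)))) \<longlonglongrightarrow> 0"
        using LIMSEQ_subseq_LIMSEQ[OF LIMSEQ_inverse_real_of_nat r] by (simp add: o_def)
      have qc: "(\<lambda>k. q ((u \<circ> r) k)) \<longlonglongrightarrow> q l"
        unfolding q_def using \<gamma> by (intro tendsto_intros lim) auto
      have t1: "(\<lambda>k. mr + inverse (real (Suc (r k))) - q ((u \<circ> r) k)) \<longlonglongrightarrow> mr + 0 - q l"
        by (intro tendsto_intros i0 qc)
      have "eventually (\<lambda>k. mr + inverse (real (Suc (r k))) - q ((u \<circ> r) k) < mr - q l + e) sequentially"
        using t1 e by (intro order_tendstoD(2)) auto
      thus "eventually (\<lambda>k. g ((u \<circ> r) k) \<le> ereal (mr - q l + e)) sequentially"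
      proof (rule eventually_mono)
        fix k assume a: "mr + inverse (real (Suc (r k))) - q ((u \<circ> r) k) < mr - q l + e"
        have hu: "h (u (r k)) < ereal (mr + inverse (real (Suc (r k))))" by (rule u2)
        have gfin: "g (u (r k)) \<noteq> \<infinity>" using hu by (auto simp: h_def)
        obtain G where gG: "g (u (r k)) = ereal G" using gfin ninf by (rule ereal_split)
        show "g ((u \<circ> r) k) \<le> ereal (mr - q l + e)" using hu a by (simp add: gG h_def)
      qed
    qed
    finally show ?thesis .
  qed
  have gfin: "g l \<noteq> \<infinity>" using key[of 1] by auto
  obtain GL where gL: "g l = ereal GL" using gfin ninf by (rule ereal_split)
  have "GL + q l \<le> mr"
  proof (rule field_le_epsilon)
    fix e :: real assume "e > 0"
    thus "GL + q l \<le> mr + e" using key[of e] by (simp add: gL)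
  qed
  hence "h l \<le> m" by (simp add: h_def gL mr)
  hence "h l \<le> h u" for u using m_le[of u] by simp
  hence "l \<in> prox g \<gamma> x" by (simp add: prox_def h_def q_def)
  thus ?thesis by auto
qed

definition llip_at :: "'a::metric_space \<Rightarrow> ('a \<Rightarrow> 'b::metric_space) \<Rightarrow> bool" where
  "llip_at x F \<longleftrightarrow> (\<exists>e>0. \<exists>L. L-lipschitz_on (ball x e) F)"

lemma lip_ball_shrink:
  "L-lipschitz_on (ball x e) F \<Longrightarrow> e' \<le> e \<Longrightarrow> L-lipschitz_on (ball x e') F"
  by (rule lipschitz_on_subset) auto

lemma lip_ball_bound:
  fixes F :: "'a::metric_space \<Rightarrow> 'b::real_normed_vector"
  assumes "L-lipschitz_on (ball x e) F" "y \<in> ball x e"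
  shows "norm (F y) \<le> norm (F x) + L * e"
proof -
  have e: "e > 0" using assms(2) by (auto simp: dist_commute) (meson dist_not_less_zero less_le_trans not_le)
  have "dist (F y) (F x) \<le> L * dist y x" using lipschitz_onD[OF assms(1) assms(2)] e by simp
  also have "\<dots> \<le> L * e" using assms(2) lipschitz_on_nonneg[OF assms(1)]
    by (intro mult_left_mono) (auto simp: dist_commute less_imp_le)
  finally have "dist (F y) (F x) \<le> L * e" .
  thus ?thesis using norm_triangle_ineq2[of "F y" "F x"] by (simp add: dist_norm)
qed

lemma llip_at_add:
  fixes F G :: "'a::metric_space \<Rightarrow> 'b::real_normed_vector"
  assumes "llip_at x F" "llip_at x G"
  shows "llip_at x (\<lambda>y. F y + G y)"
proof -
  obtain e1 L1 where 1: "e1 > 0" "L1-lipschitz_on (ball x e1) F" using assms(1) by (auto simp: llip_at_def)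
  obtain e2 L2 where 2: "e2 > 0" "L2-lipschitz_on (ball x e2) G" using assms(2) by (auto simp: llip_at_def)
  have "(L1+L2)-lipschitz_on (ball x (min e1 e2)) (\<lambda>y. F y + G y)"
    by (intro lipschitz_on_add lip_ball_shrink[OF 1(2)] lip_ball_shrink[OF 2(2)]) auto
  thus ?thesis unfolding llip_at_def using 1 2 by (intro exI[of _ "min e1 e2"]) auto
qed

lemma llip_at_const: "llip_at x (\<lambda>y. c)"
  unfolding llip_at_def by (intro exI[of _ 1]) (auto intro: lipschitz_on_constant)

lemma llip_at_sum:
  fixes F :: "'i \<Rightarrow> 'a::metric_space \<Rightarrow> 'b::real_normed_vector"
  assumes "finite I" "\<And>i. i \<in> I \<Longrightarrow> llip_at x (F i)"
  shows "llip_at x (\<lambda>y. \<Sum>i\<in>I. F i y)"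
  using assms
proof (induction I rule: finite_induct)
  case empty thus ?case by (simp add: llip_at_const)
next
  case (insert i I) thus ?case by (simp add: llip_at_add)
qed

lemma llip_at_cmult:
  fixes F :: "'a::metric_space \<Rightarrow> 'b::real_normed_vector"
  assumes "llip_at x F"
  shows "llip_at x (\<lambda>y. a *\<^sub>R F y)"
  using assms lipschitz_on_cmult unfolding llip_at_def by blast

lemma llip_at_mult:
  fixes u :: "'a::metric_space \<Rightarrow> real" and v :: "'a \<Rightarrow> 'b::real_normed_vector"
  assumes "llip_at x u" "llip_at x v"
  shows "llip_at x (\<lambda>y. u y *\<^sub>R v y)"
proof -
  obtain e1 L1 where 1: "e1 > 0" "L1-lipschitz_on (ball x e1) u" using assms(1) by (auto simp: llip_at_def)
  obtain e2 L2 where 2: "e2 > 0" "L2-lipschitz_on (ball x e2) v" using assms(2) by (auto simp: llip_at_def)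
  define e where "e = min e1 e2"
  have l1: "L1-lipschitz_on (ball x e) u" by (rule lip_ball_shrink[OF 1(2)]) (simp add: e_def)
  have l2: "L2-lipschitz_on (ball x e) v" by (rule lip_ball_shrink[OF 2(2)]) (simp add: e_def)
  have L1: "L1 \<ge> 0" using lipschitz_on_nonneg[OF l1] .
  have L2: "L2 \<ge> 0" using lipschitz_on_nonneg[OF l2] .
  define Mu where "Mu = norm (u x) + L1 * e"
  define Mv where "Mv = norm (v x) + L2 * e"
  have bu: "\<bar>u y\<bar> \<le> Mu" if "y \<in> ball x e" for y using lip_ball_bound[OF l1 that] by (simp add: Mu_def)
  have bv: "norm (v y) \<le> Mv" if "y \<in> ball x e" for y using lip_ball_bound[OF l2 that] by (simp add: Mv_def)
  have Mu: "Mu \<ge> 0" using L1 1 2 by (simp add: Mu_def e_def)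
  have "(L1 * Mv + Mu * L2)-lipschitz_on (ball x e) (\<lambda>y. u y *\<^sub>R v y)"
  proof (rule lipschitz_onI)
    fix y y' assume y: "y \<in> ball x e" and y': "y' \<in> ball x e"
    have "u y *\<^sub>R v y - u y' *\<^sub>R v y' = (u y - u y') *\<^sub>R v y + u y' *\<^sub>R (v y - v y')"
      by (simp add: algebra_simps)
    hence "norm (u y *\<^sub>R v y - u y' *\<^sub>R v y') \<le> \<bar>u y - u y'\<bar> * norm (v y) + \<bar>u y'\<bar> * norm (v y - v y')"
      by (metis norm_scaleR norm_triangle_ineq)
    also have "\<dots> \<le> (L1 * dist y y') * Mv + Mu * (L2 * dist y y')"
    proof (intro add_mono mult_mono)
      show "\<bar>u y - u y'\<bar> \<le> L1 * dist y y'" using lipschitz_onD[OF l1 y y'] by (simp add: dist_real_def)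
      show "norm (v y - v y') \<le> L2 * dist y y'" using lipschitz_onD[OF l2 y y'] by (simp add: dist_norm)
    qed (use bv[OF y] bu[OF y'] L1 Mu in auto)
    finally show "dist (u y *\<^sub>R v y) (u y' *\<^sub>R v y') \<le> (L1 * Mv + Mu * L2) * dist y y'"
      by (simp add: dist_norm algebra_simps)
  next
    have "Mv \<ge> 0" using L2 1 2 by (simp add: Mv_def e_def)
    thus "0 \<le> L1 * Mv + Mu * L2" using L1 L2 Mu by simp
  qed
  thus ?thesis unfolding llip_at_def using 1 2 by (intro exI[of _ e]) (auto simp: e_def)
qed

lemma llip_at_compose:
  fixes F :: "'a::metric_space \<Rightarrow> 'b::metric_space" and H :: "'b \<Rightarrow> 'c::metric_space"
  assumes "llip_at x F" "llip_at (F x) H"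
  shows "llip_at x (\<lambda>y. H (F y))"
proof -
  obtain e1 C where 1: "e1 > 0" "C-lipschitz_on (ball x e1) F" using assms(1) by (auto simp: llip_at_def)
  obtain d D where 2: "d > 0" "D-lipschitz_on (ball (F x) d) H" using assms(2) by (auto simp: llip_at_def)
  have C: "C \<ge> 0" using lipschitz_on_nonneg[OF 1(2)] .
  define e where "e = min e1 (d / (C + 1))"
  have e: "e > 0" using 1 2 C by (simp add: e_def)
  have l1: "C-lipschitz_on (ball x e) F" by (rule lip_ball_shrink[OF 1(2)]) (simp add: e_def)
  have img: "F ` ball x e \<subseteq> ball (F x) d"
  proof
    fix z assume "z \<in> F ` ball x e"
    then obtain y where y: "y \<in> ball x e" "z = F y" by auto
    have "dist (F x) (F y) \<le> C * dist x y" using lipschitz_onD[OF l1 _ y(1)] e by simp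
    also have "\<dots> \<le> C * (d / (C+1))" using y(1) C by (intro mult_left_mono) (auto simp: e_def)
    also have "\<dots> < d" using C 2 by (simp add: field_simps)
    finally show "z \<in> ball (F x) d" using y by simp
  qed
  have "(D * C)-lipschitz_on (ball x e) (\<lambda>y. H (F y))"
    by (rule lipschitz_on_compose2[OF l1 lipschitz_on_subset[OF 2(2) img]])
  thus ?thesis unfolding llip_at_def using e by blast
qed

lemma llip_at_deriv:
  fixes F :: "'a::euclidean_space \<Rightarrow> real"
  assumes der: "\<And>y. (F has_derivative (\<lambda>h. inner (dF y) h)) (at y)"
    and ll: "llip_at x dF"
  shows "llip_at x F"
proof -
  obtain e L where 1: "e > 0" "L-lipschitz_on (ball x e) dF" using ll by (auto simp: llip_at_def)
  define M where "M = norm (dF x) + L * e"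
  have L: "L \<ge> 0" using lipschitz_on_nonneg[OF 1(2)] .
  have M: "M \<ge> 0" using L 1 by (simp add: M_def)
  have "M-lipschitz_on (ball x e) F"
  proof (rule lipschitz_onI)
    fix y y' assume y: "y \<in> ball x e" and y': "y' \<in> ball x e"
    have "norm (F y - F y') \<le> M * norm (y - y')"
    proof (rule differentiable_bound[OF convex_ball _ _ y y'])
      fix z assume z: "z \<in> ball x e"
      show "(F has_derivative (\<lambda>h. inner (dF z) h)) (at z within ball x e)"
        using der has_derivative_at_withinI by blast
      show "onorm (\<lambda>h. inner (dF z) h) \<le> M"
      proof (rule onorm_le)
        fix h
        have "norm (inner (dF z) h) \<le> norm (dF z) * norm h" by (simp add: Cauchy_Schwarz_ineq2)
        also have "\<dots> \<le> M * norm h" using lip_ball_bound[OF 1(2) z] by (intro mult_right_mono) (auto simp: M_def)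
        finally show "norm (inner (dF z) h) \<le> M * norm h" .
      qed
    qed
    thus "dist (F y) (F y') \<le> M * dist y y'" by (simp add: dist_norm)
  qed (rule M)
  thus ?thesis unfolding llip_at_def using 1 by blast
qed

lemma llip_at_real_deriv:
  fixes F dF :: "real \<Rightarrow> real"
  assumes t: "t < 0" and der: "\<And>s. s < 0 \<Longrightarrow> (F has_real_derivative dF s) (at s)"
    and cont: "continuous_on {..<0} dF"
  shows "llip_at t F"
proof -
  define d where "d = - t / 2"
  have d: "d > 0" using t by (simp add: d_def)
  have sub: "cball t d \<subseteq> {..<0}" using t by (auto simp: d_def dist_real_def)
  have "compact (dF ` cball t d)"
    by (rule compact_continuous_image[OF continuous_on_subset[OF cont sub] compact_cball])
  then obtain M where M: "M > 0" "\<And>y. y \<in> dF ` cball t d \<Longrightarrow> norm y \<le> M"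
    using compact_imp_bounded bounded_pos by metis
  have "M-lipschitz_on (ball t d) F"
  proof (rule lipschitz_onI)
    fix y y' assume y: "y \<in> ball t d" and y': "y' \<in> ball t d"
    have "norm (F y - F y') \<le> M * norm (y - y')"
    proof (rule differentiable_bound[OF convex_ball _ _ y y'])
      fix z assume z: "z \<in> ball t d"
      have "z \<in> {..<0}" using z sub by (meson ball_subset_cball subsetD)
      hence z0: "z < 0" by simp
      show "(F has_derivative (\<lambda>h. dF z * h)) (at z within ball t d)"
        using has_derivative_at_withinI[OF has_field_derivative_imp_has_derivative[OF der[OF z0]]] by simp
      show "onorm (\<lambda>h. dF z * h) \<le> M"
      proof (rule onorm_le)
        fix h :: real
        have "\<bar>dF z\<bar> \<le> M" using M(2)[of "dF z"] z by auto
        thus "norm (dF z * h) \<le> M * norm h" by (simp add: abs_mult mult_right_mono)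
      qed
    qed
    thus "dist (F y) (F y') \<le> M * dist y y'" by (simp add: dist_norm)
  qed (use M in simp)
  thus ?thesis unfolding llip_at_def using d by blast
qed

locale ipfb =
  fixes f :: "'a::euclidean_space \<Rightarrow> real" and df :: "'a \<Rightarrow> 'a"
    and g :: "'a \<Rightarrow> ereal"
    and m :: nat and c :: "nat \<Rightarrow> 'a \<Rightarrow> real" and dc :: "nat \<Rightarrow> 'a \<Rightarrow> 'a"
    and b db d2b :: "real \<Rightarrow> real"
    and z0 :: 'a and \<mu> \<epsilon> \<gamma>0 \<alpha> \<beta> :: real
  assumes f_grad: "\<And>x. (f has_derivative (\<lambda>h. inner (df x) h)) (at x)"
    and f_lip: "locally_lipschitz df"
    and g_nonneginf: "\<And>x. g x \<noteq> -\<infinity>"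
    and g_proper: "\<exists>x. g x \<noteq> \<infinity>"
    and g_lsc: "lsc g"
    and g_proxbdd: "prox_bounded g"
    and g_cont: "cont_rel_dom g"
    and c_grad: "\<And>i x. i < m \<Longrightarrow> (c i has_derivative (\<lambda>h. inner (dc i x) h)) (at x)"
    and c_lip: "\<And>i. i < m \<Longrightarrow> locally_lipschitz (dc i)"
    and inf_finite: "\<bar>(INF x\<in>{x. \<forall>i<m. c i x \<le> 0}. ereal (f x) + g x)\<bar> \<noteq> \<infinity>"
    and F_nonempty: "\<exists>x. g x \<noteq> \<infinity> \<and> (\<forall>i<m. c i x < 0)"
    and b_nonneg: "\<And>t. t < 0 \<Longrightarrow> b t \<ge> 0"
    and b_deriv: "\<And>t. t < 0 \<Longrightarrow> (b has_real_derivative db t) (at t)"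
    and db_deriv: "\<And>t. t < 0 \<Longrightarrow> (db has_real_derivative d2b t) (at t)"
    and d2b_cont: "continuous_on {..<0} d2b"
    and db_pos: "\<And>t. t < 0 \<Longrightarrow> db t > 0"
    and b_blowup: "filterlim b at_top (at_left 0)"
    and z0_F: "g z0 \<noteq> \<infinity>" "\<forall>i<m. c i z0 < 0"
    and mu_pos: "\<mu> > 0" and eps_pos: "\<epsilon> > 0"
    and gamma0: "\<gamma>0 > 0" "ereal \<gamma>0 < gamma_g g"
    and alpha: "0 < \<alpha>" "\<alpha> < 1"
    and beta: "0 < \<beta>" "\<beta> < 1"
begin

definition "DD = {x. \<forall>i<m. c i x < 0}"
definition "phi z = f z + \<mu> * (\<Sum>i<m. b (c i z))"
abbreviation "GG \<equiv> grad_fmu df c dc m db \<mu>"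
abbreviation "QQ \<equiv> qmu f g c m b \<mu>"

lemma fmu_in: "z \<in> DD \<Longrightarrow> fmu f c m b \<mu> z = ereal (phi z)"
  by (simp add: fmu_def DD_def phi_def)

lemma fmu_out: "z \<notin> DD \<Longrightarrow> fmu f c m b \<mu> z = \<infinity>"
  by (simp add: fmu_def DD_def)

lemma QQ_in: "z \<in> DD \<Longrightarrow> QQ z = ereal (phi z) + g z"
  by (simp add: qmu_def fmu_in)

lemma QQ_finite:
  assumes "QQ z \<noteq> \<infinity>"
  shows "z \<in> DD" "g z \<noteq> \<infinity>"
proof -
  show "z \<in> DD"
  proof (rule ccontr)
    assume "z \<notin> DD"
    hence "QQ z = \<infinity>" using g_nonneginf[of z] by (simp add: qmu_def fmu_out)
    thus False using assms by simp
  qed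
  thus "g z \<noteq> \<infinity>" using assms by (auto simp: QQ_in)
qed

lemma phi_ge_f: "z \<in> DD \<Longrightarrow> f z \<le> phi z"
proof -
  assume z: "z \<in> DD"
  have "0 \<le> (\<Sum>i<m. b (c i z))" using z b_nonneg by (intro sum_nonneg) (auto simp: DD_def)
  hence "0 \<le> \<mu> * (\<Sum>i<m. b (c i z))" using mu_pos by simp
  thus ?thesis by (simp add: phi_def)
qed

lemma lower_bound: "\<exists>Q. \<forall>z\<in>DD. ereal Q \<le> QQ z"
proof -
  define I where "I = (INF x\<in>{x. \<forall>i<m. c i x \<le> 0}. ereal (f x) + g x)"
  have "I \<noteq> \<infinity>" "I \<noteq> -\<infinity>" using inf_finite by (auto simp: I_def)
  then obtain Q where Q: "I = ereal Q" by (cases I) auto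
  have "ereal Q \<le> QQ z" if z: "z \<in> DD" for z
  proof -
    have "I \<le> ereal (f z) + g z" unfolding I_def using z
      by (intro INF_lower) (auto simp: DD_def less_imp_le)
    also have "\<dots> \<le> ereal (phi z) + g z" using phi_ge_f[OF z] by (intro add_right_mono) simp
    finally show ?thesis by (simp add: Q QQ_in[OF z])
  qed
  thus ?thesis by blast
qed

lemma c_cont: "i < m \<Longrightarrow> continuous_on UNIV (c i)"
  using c_grad by (meson continuous_at_imp_continuous_on has_derivative_continuous)

lemma DD_open: "open DD"
proof -
  have "DD = (\<Inter>i\<in>{..<m}. {x. c i x < 0})" by (auto simp: DD_def)
  moreover have "open {x. c i x < 0}" if "i < m" for i
    using c_cont[OF that] by (intro open_Collect_less) (auto intro: continuous_intros)
  ultimately show ?thesis by (auto intro!: open_INT)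
qed

lemma phi_deriv:
  assumes z: "z \<in> DD"
  shows "(phi has_derivative (\<lambda>h. inner (GG z) h)) (at z)"
proof -
  have bc: "((\<lambda>y. b (c i y)) has_derivative (\<lambda>h. db (c i z) * inner (dc i z) h)) (at z)" if i: "i < m" for i
  proof -
    have "c i z < 0" using z i by (simp add: DD_def)
    hence "(b has_derivative (\<lambda>t. db (c i z) * t)) (at (c i z))"
      using b_deriv has_field_derivative_imp_has_derivative by blast
    from has_derivative_compose[OF c_grad[OF i] this] show ?thesis by simp
  qed
  have "(phi has_derivative (\<lambda>h. inner (df z) h + \<mu> * (\<Sum>i<m. db (c i z) * inner (dc i z) h))) (at z)"
    unfolding phi_def
    by (intro has_derivative_add f_grad has_derivative_mult_right has_derivative_sum bc) simp
  thus ?thesis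
    by (rule has_derivative_eq_rhs)
      (simp add: fun_eq_iff grad_fmu_def inner_add_left inner_sum_left)
qed

lemma GG_llip:
  assumes z: "z \<in> DD"
  shows "llip_at z GG"
proof -
  have ll_loc: "llip_at x F" if "locally_lipschitz F" for x and F :: "'a \<Rightarrow> 'a"
    using that by (auto simp: locally_lipschitz_def llip_at_def)
  have "llip_at z (\<lambda>y. db (c i y) *\<^sub>R dc i y)" if i: "i < m" for i
  proof (rule llip_at_mult)
    have cz: "c i z < 0" using z i by (simp add: DD_def)
    show "llip_at z (\<lambda>y. db (c i y))"
    proof (rule llip_at_compose[where F="c i" and H=db])
      show "llip_at z (c i)" by (rule llip_at_deriv[OF c_grad[OF i] ll_loc[OF c_lip[OF i]]])
      show "llip_at (c i z) db" by (rule llip_at_real_deriv[OF cz db_deriv d2b_cont])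
    qed
    show "llip_at z (dc i)" by (rule ll_loc[OF c_lip[OF i]])
  qed
  hence "llip_at z (\<lambda>y. df y + \<mu> *\<^sub>R (\<Sum>i<m. db (c i y) *\<^sub>R dc i y))"
    by (intro llip_at_add ll_loc[OF f_lip] llip_at_cmult llip_at_sum) auto
  thus ?thesis by (simp add: grad_fmu_def[abs_def])
qed

lemma GG_lip_ball:
  assumes z: "z \<in> DD"
  shows "\<exists>e>0. \<exists>L. L \<ge> 0 \<and> ball z e \<subseteq> DD \<and> L-lipschitz_on (ball z e) GG"
proof -
  obtain e1 L where 1: "e1 > 0" "L-lipschitz_on (ball z e1) GG" using GG_llip[OF z] by (auto simp: llip_at_def)
  obtain e2 where 2: "e2 > 0" "ball z e2 \<subseteq> DD" using DD_open z open_contains_ball by blast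
  have "L-lipschitz_on (ball z (min e1 e2)) GG" by (rule lip_ball_shrink[OF 1(2)]) simp
  moreover have "ball z (min e1 e2) \<subseteq> DD" using 2 by auto
  ultimately show ?thesis using 1 2 lipschitz_on_nonneg[OF 1(2)] by (intro exI[of _ "min e1 e2"]) auto
qed

definition "gp = (SOME \<gamma>'. \<gamma>' \<in> prox_bdd_set g \<and> \<gamma>0 < \<gamma>')"

lemma gp: "gp \<in> prox_bdd_set g" "\<gamma>0 < gp"
proof -
  have "\<exists>x\<in>ereal ` prox_bdd_set g. ereal \<gamma>0 < x"
    using gamma0(2) unfolding gamma_g_def by (simp add: less_Sup_iff)
  hence "\<exists>\<gamma>'. \<gamma>' \<in> prox_bdd_set g \<and> \<gamma>0 < \<gamma>'" by auto
  from someI_ex[OF this] show "gp \<in> prox_bdd_set g" "\<gamma>0 < gp" unfolding gp_def by auto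
qed

lemma gp_pos: "gp > 0" using gp gamma0 by simp

definition "Bp = (SOME B. \<forall>x. ereal B \<le> g x + ereal (norm x ^ 2 / (2 * gp)))"

lemma Bp: "ereal Bp \<le> g x + ereal (norm x ^ 2 / (2 * gp))"
proof -
  have "\<exists>B. \<forall>x. ereal B \<le> g x + ereal (norm x ^ 2 / (2 * gp))" using gp(1) by (simp add: prox_bdd_set_def)
  from someI_ex[OF this] show ?thesis unfolding Bp_def by blast
qed

lemma Tmu_nonempty:
  assumes "0 < \<gamma>" "\<gamma> \<le> \<gamma>0"
  shows "Tmu df g c dc m db \<mu> \<gamma> z \<noteq> {}"
  unfolding Tmu_def
  by (rule prox_nonempty[OF g_lsc g_nonneginf g_proper gp(1) assms(1)]) (use assms gp in simp)

end

context ipfb begin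

lemma f_cont: "continuous_on UNIV f"
  using f_grad by (meson continuous_at_imp_continuous_on has_derivative_continuous)

lemma prox_ineq:
  assumes "w \<in> prox g \<gamma> x"
  shows "g w + ereal (norm (w - x)^2 / (2*\<gamma>)) \<le> g u + ereal (norm (u - x)^2 / (2*\<gamma>))"
  using assms by (simp add: prox_def)

lemma accept_local:
  assumes S: "convex S" "S \<subseteq> DD" and L: "L-lipschitz_on S GG" and zS: "z \<in> S" and zbS: "zb \<in> S"
    and \<gamma>: "0 < \<gamma>" "L * \<gamma> \<le> \<alpha>"
    and zb: "zb \<in> Tmu df g c dc m db \<mu> \<gamma> z" and gz: "g z \<noteq> \<infinity>"
  shows "ipfb_accept f df g c dc m b db \<mu> \<alpha> \<gamma> z zb"
proof -
  have zD: "z \<in> DD" and zbD: "zb \<in> DD" using S zS zbS by auto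
  define x where "x = z - \<gamma> *\<^sub>R GG z"
  define d where "d = zb - z"
  have pi: "g zb + ereal (norm (zb - x)^2 / (2*\<gamma>)) \<le> g z + ereal (norm (z - x)^2 / (2*\<gamma>))"
    using zb by (intro prox_ineq) (simp add: Tmu_def x_def)
  obtain Gz where Gz: "g z = ereal Gz" using gz g_nonneginf by (rule ereal_split)
  have gzb: "g zb \<noteq> \<infinity>" using pi by (auto simp: Gz)
  obtain Gb where Gb: "g zb = ereal Gb" using gzb g_nonneginf by (rule ereal_split)
  have pr: "Gb + norm (zb - x)^2 / (2*\<gamma>) \<le> Gz + norm (z - x)^2 / (2*\<gamma>)" using pi by (simp add: Gz Gb)
  have e1: "norm (zb - x)^2 = norm d ^2 + 2 * \<gamma> * inner d (GG z) + \<gamma>^2 * norm (GG z)^2"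
  proof -
    have "zb - x = d + \<gamma> *\<^sub>R GG z" by (simp add: x_def d_def algebra_simps)
    hence "norm (zb - x)^2 = inner (d + \<gamma> *\<^sub>R GG z) (d + \<gamma> *\<^sub>R GG z)"
      by (simp only: power2_norm_eq_inner)
    also have "\<dots> = inner d d + 2 * \<gamma> * inner d (GG z) + \<gamma>^2 * inner (GG z) (GG z)"
      by (simp add: inner_add_left inner_add_right inner_commute power2_eq_square algebra_simps)
    also have "\<dots> = norm d ^2 + 2 * \<gamma> * inner d (GG z) + \<gamma>^2 * norm (GG z)^2"
      by (simp only: power2_norm_eq_inner)
    finally show ?thesis .
  qed
  have e2: "norm (z - x)^2 = \<gamma>^2 * norm (GG z)^2" by (simp add: x_def power_mult_distrib)
  have "norm (zb - x)^2 / (2*\<gamma>) = norm d ^2 / (2*\<gamma>) + inner d (GG z) + \<gamma> * norm (GG z)^2 / 2"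
    using \<gamma> unfolding e1 by (simp add: field_simps power2_eq_square)
  moreover have "norm (z - x)^2 / (2*\<gamma>) = \<gamma> * norm (GG z)^2 / 2"
    using \<gamma> unfolding e2 by (simp add: field_simps power2_eq_square)
  ultimately have gb: "Gb \<le> Gz - norm d ^2 / (2*\<gamma>) - inner d (GG z)" using pr by linarith
  have lipS: "norm (GG y - GG y') \<le> L * norm (y - y')" if "y \<in> S" "y' \<in> S" for y y'
    using lipschitz_on_normD[OF L that] .
  have desc: "phi zb \<le> phi z + inner (GG z) (zb - z) + L / 2 * norm (zb - z) ^ 2"
    by (rule descent_lemma[OF S(1) zS zbS _ lipS]) (use phi_deriv S in auto)
  have L0: "L \<ge> 0" using lipschitz_on_nonneg[OF L] .
  have "L / 2 * norm d ^ 2 \<le> \<alpha> / (2*\<gamma>) * norm d ^ 2"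
  proof (intro mult_right_mono)
    show "L / 2 \<le> \<alpha> / (2*\<gamma>)" using \<gamma> by (simp add: field_simps mult.commute)
  qed simp
  hence "phi zb + Gb \<le> phi z + Gz - (norm d ^2 / (2*\<gamma>) - \<alpha> / (2*\<gamma>) * norm d ^ 2)"
    using desc gb by (simp add: d_def inner_commute)
  moreover have "norm d ^2 / (2*\<gamma>) - \<alpha> / (2*\<gamma>) * norm d ^ 2 = (1 - \<alpha>) / (2 * \<gamma>) * norm d ^ 2"
    using \<gamma> by (simp add: field_simps)
  ultimately have b: "phi zb + Gb \<le> phi z + Gz - (1 - \<alpha>) / (2 * \<gamma>) * norm d ^ 2" by simp
  have c: "norm (GG zb - GG z) \<le> \<alpha> / \<gamma> * norm (zb - z)"
  proof -
    have "norm (GG zb - GG z) \<le> L * norm (zb - z)" by (rule lipS[OF zbS zS])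
    also have "\<dots> \<le> \<alpha> / \<gamma> * norm (zb - z)"
      using \<gamma> by (intro mult_right_mono) (simp_all add: field_simps mult.commute)
    finally show ?thesis .
  qed
  show ?thesis unfolding ipfb_accept_def
  proof (intro conjI)
    show "\<forall>i<m. c i zb < 0" using zbD by (simp add: DD_def)
    show "QQ zb \<le> QQ z - ereal ((1 - \<alpha>) / (2 * \<gamma>) * (norm (zb - z))\<^sup>2)"
      using b by (simp add: QQ_in[OF zbD] QQ_in[OF zD] Gz Gb d_def)
  qed (rule c)
qed

end

context ipfb begin

lemma uniform_accept:
  assumes zs: "zs \<in> DD"
  shows "\<exists>r>0. \<exists>\<gamma>b>0. \<forall>z \<gamma> zb. norm (z - zs) < r \<longrightarrow> QQ z \<le> ereal K \<longrightarrow> 0 < \<gamma> \<longrightarrow> \<gamma> \<le> \<gamma>b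
     \<longrightarrow> zb \<in> Tmu df g c dc m db \<mu> \<gamma> z \<longrightarrow> ipfb_accept f df g c dc m b db \<mu> \<alpha> \<gamma> z zb"
proof -
  obtain e L where e: "e > 0" "L \<ge> 0" "ball zs e \<subseteq> DD" "L-lipschitz_on (ball zs e) GG"
    using GG_lip_ball[OF zs] by blast
  define r where "r = e / 2"
  have r: "r > 0" "r < e" using e by (auto simp: r_def)
  have "compact (f ` cball zs r)"
    by (rule compact_continuous_image[OF continuous_on_subset[OF f_cont] compact_cball]) simp
  then obtain M where M: "M > 0" "\<And>y. y \<in> f ` cball zs r \<Longrightarrow> norm y \<le> M"
    using compact_imp_bounded bounded_pos by metis
  define Gm where "Gm = norm (GG zs) + L * e"
  have Gm: "norm (GG y) \<le> Gm" if "y \<in> ball zs e" for y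
    using lip_ball_bound[OF e(4) that] by (simp add: Gm_def)
  have Gm0: "Gm \<ge> 0" using e by (simp add: Gm_def)
  define Xb where "Xb = norm zs + r + \<gamma>0 * Gm"
  define V where "V = K + M + \<gamma>0 * Gm^2 / 2"
  define E where "E = max 1 (V - Bp + Xb^2 / gp)"
  have E: "E > 0" by (simp add: E_def)
  define \<gamma>b where "\<gamma>b = min (min \<gamma>0 (gp/4)) (min (r^2/(64*E)) (min (r/(4*(Gm+1))) (\<alpha>/(L+1))))"
  have \<gamma>b: "\<gamma>b > 0" using gamma0 gp_pos r E Gm0 alpha e by (simp add: \<gamma>b_def)
  have main: "ipfb_accept f df g c dc m b db \<mu> \<alpha> \<gamma> z zb"
    if z: "norm (z - zs) < r" and QK: "QQ z \<le> ereal K" and \<gamma>: "0 < \<gamma>" "\<gamma> \<le> \<gamma>b"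
      and zb: "zb \<in> Tmu df g c dc m db \<mu> \<gamma> z" for z \<gamma> zb
  proof -
    have zball: "z \<in> ball zs e" using z r by (simp add: dist_norm norm_minus_commute)
    have zcball: "z \<in> cball zs r" using z by (simp add: dist_norm norm_minus_commute)
    have QQfin: "QQ z \<noteq> \<infinity>" using QK by auto
    have zD: "z \<in> DD" and gz: "g z \<noteq> \<infinity>" using QQ_finite[OF QQfin] by auto
    obtain Gz where Gz: "g z = ereal Gz" using gz g_nonneginf by (rule ereal_split)
    have 1: "phi z + Gz \<le> K" using QK by (simp add: QQ_in[OF zD] Gz)
    have "norm (f z) \<le> M" using M(2) zcball by blast
    hence "f z \<ge> -M" by simp
    hence GzK: "Gz \<le> K + M" using 1 phi_ge_f[OF zD] by linarith
    have Gz_le: "norm (GG z) \<le> Gm" using Gm[OF zball] .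
    have \<gamma>0': "\<gamma> \<le> \<gamma>0" and \<gamma>gp: "4 * \<gamma> \<le> gp" and \<gamma>E: "\<gamma> \<le> r^2/(64*E)"
      and \<gamma>G: "\<gamma> \<le> r/(4*(Gm+1))" and \<gamma>L: "\<gamma> \<le> \<alpha>/(L+1)" using \<gamma> by (auto simp: \<gamma>b_def)
    define x where "x = z - \<gamma> *\<^sub>R GG z"
    have "norm z \<le> norm zs + r"
      using z norm_triangle_ineq[of "z - zs" zs] by simp
    moreover have "\<gamma> * norm (GG z) \<le> \<gamma>0 * Gm" using \<gamma> \<gamma>0' Gz_le Gm0 by (intro mult_mono) auto
    moreover have "norm x \<le> norm z + \<gamma> * norm (GG z)"
      using norm_triangle_ineq4[of z "\<gamma> *\<^sub>R GG z"] \<gamma> by (simp add: x_def)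
    ultimately have xb: "norm x \<le> Xb" by (simp add: Xb_def)
    have pi: "g zb + ereal (norm (zb - x)^2 / (2*\<gamma>)) \<le> g z + ereal (norm (z - x)^2 / (2*\<gamma>))"
      using zb by (intro prox_ineq) (simp add: Tmu_def x_def)
    have zx: "norm (z - x)^2 / (2*\<gamma>) = \<gamma> * norm (GG z)^2 / 2"
      using \<gamma> by (simp add: x_def power_mult_distrib power2_eq_square)
    have "\<gamma> * norm (GG z)^2 \<le> \<gamma>0 * Gm^2"
      using \<gamma> \<gamma>0' Gz_le by (intro mult_mono power_mono) auto
    hence zx2: "norm (z - x)^2 / (2*\<gamma>) \<le> \<gamma>0 * Gm^2 / 2" unfolding zx by simp
    have gzb: "g zb \<noteq> \<infinity>" using pi by (auto simp: Gz)
    obtain Gb where Gb: "g zb = ereal Gb" using gzb g_nonneginf by (rule ereal_split)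
    have pr: "Gb + norm (zb - x)^2 / (2*\<gamma>) \<le> V"
      using pi zx2 GzK by (simp add: Gz Gb V_def)
    have B: "Bp \<le> Gb + norm zb ^ 2 / (2 * gp)" using Bp[of zb] by (simp add: Gb)
    have nzb: "norm zb \<le> norm (zb - x) + norm x" using norm_triangle_ineq[of "zb - x" x] by simp
    have Hq: "Bp - norm zb^2/(2*gp) + norm (zb - x)^2/(2*\<gamma>) \<le> V" using pr B by linarith
    have "norm (zb - x)^2 \<le> 4 * \<gamma> * (V - Bp + norm x ^2 / gp)"
      using quad_bound_small[OF \<gamma>(1) \<gamma>gp norm_ge_zero norm_ge_zero norm_ge_zero nzb Hq] .
    also have "\<dots> \<le> 4 * \<gamma> * E"
    proof (intro mult_left_mono)
      have "norm x ^ 2 \<le> Xb ^ 2" using xb by (simp add: power_mono)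
      hence "norm x ^2 / gp \<le> Xb^2 / gp" using gp_pos by (simp add: divide_right_mono)
      thus "V - Bp + norm x ^2 / gp \<le> E" by (simp add: E_def)
    qed (use \<gamma> in simp)
    also have "\<dots> \<le> 4 * (r^2/(64*E)) * E" using \<gamma>E E by (intro mult_right_mono) auto
    also have "\<dots> = (r/4)^2" using E by (simp add: field_simps power2_eq_square)
    finally have sq: "norm (zb - x)^2 \<le> (r/4)^2" .
    have "norm (zb - x) \<le> r/4" using power2_le_imp_le[OF sq] r by simp
    moreover have "\<gamma> * Gm \<le> r/4"
    proof -
      have "\<gamma> * Gm \<le> r/(4*(Gm+1)) * Gm" using \<gamma>G Gm0 by (intro mult_right_mono) auto
      also have "\<dots> \<le> r/4" using r Gm0 by (simp add: field_simps)
      finally show ?thesis .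
    qed
    moreover have "\<gamma> * norm (GG z) \<le> \<gamma> * Gm" using \<gamma> Gz_le by (intro mult_left_mono) auto
    moreover have "norm (zb - z) \<le> norm (zb - x) + \<gamma> * norm (GG z)"
    proof -
      have e: "zb - z = (zb - x) - \<gamma> *\<^sub>R GG z" by (simp add: x_def algebra_simps)
      have "norm ((zb - x) - \<gamma> *\<^sub>R GG z) \<le> norm (zb - x) + \<gamma> * norm (GG z)"
        using norm_triangle_ineq4[of "zb - x" "\<gamma> *\<^sub>R GG z"] \<gamma> by simp
      thus ?thesis by (simp only: e)
    qed
    ultimately have dzb: "norm (zb - z) \<le> r/2" by simp
    have "norm (zb - zs) \<le> norm (zb - z) + norm (z - zs)" using norm_triangle_ineq[of "zb - z" "z - zs"] by simp
    hence zbball: "zb \<in> ball zs e" using dzb z r by (simp add: dist_norm norm_minus_commute r_def)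
    have "L * \<gamma> \<le> L * (\<alpha>/(L+1))" using \<gamma>L e by (intro mult_left_mono) auto
    also have "\<dots> \<le> \<alpha>" using e alpha by (simp add: field_simps)
    finally have L\<gamma>: "L * \<gamma> \<le> \<alpha>" .
    show ?thesis
      by (rule accept_local[OF convex_ball e(3) e(4) zball zbball \<gamma>(1) L\<gamma> zb gz])
  qed
  show ?thesis
    apply (rule exI[of _ r])
    apply (intro conjI r(1))
    apply (rule exI[of _ \<gamma>b])
    apply (intro conjI \<gamma>b allI impI)
    apply (erule (4) main)
    done
qed

end

context ipfb begin

lemma subdiff_ret:
  assumes zb: "zb \<in> Tmu df g c dc m db \<mu> \<gamma> z" and \<gamma>: "0 < \<gamma>" and zbD: "zb \<in> DD" and gzb: "g zb \<noteq> \<infinity>"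
  shows "(1/\<gamma>) *\<^sub>R (z - zb) - GG z + GG zb \<in> frechet_subdiff QQ zb"
proof -
  define v where "v = (1/\<gamma>) *\<^sub>R (z - zb) - GG z + GG zb"
  define x where "x = z - \<gamma> *\<^sub>R GG z"
  define p where "p = zb - x"
  have v: "v = GG zb - (1/\<gamma>) *\<^sub>R p" using \<gamma> by (simp add: v_def p_def x_def algebra_simps)
  obtain Gb where Gb: "g zb = ereal Gb" using gzb g_nonneginf by (rule ereal_split)
  have Qzb: "QQ zb = ereal (phi zb + Gb)" by (simp add: QQ_in[OF zbD] Gb)
  have "v \<in> frechet_subdiff QQ zb"
    unfolding frechet_subdiff_def
  proof (intro CollectI conjI allI impI)
    show "\<bar>QQ zb\<bar> \<noteq> \<infinity>" by (simp add: Qzb)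
    fix e :: real assume e: "e > 0"
    obtain d1 where d1: "d1 > 0" "\<And>w. norm (w - zb) < d1 \<Longrightarrow>
        norm (phi w - phi zb - inner (GG zb) (w - zb)) \<le> e/2 * norm (w - zb)"
      using phi_deriv[OF zbD] e unfolding has_derivative_at_alt by (meson half_gt_zero)
    obtain d2 where d2: "d2 > 0" "ball zb d2 \<subseteq> DD" using DD_open zbD open_contains_ball by blast
    define d where "d = min d1 (min d2 (\<gamma> * e))"
    have d: "d > 0" using d1 d2 \<gamma> e by (simp add: d_def)
    have "\<forall>w. norm (w - zb) < d \<longrightarrow> QQ zb + ereal (inner v (w - zb) - e * norm (w - zb)) \<le> QQ w"
    proof (intro allI impI)
      fix w assume w: "norm (w - zb) < d"
      have wD: "w \<in> DD" using w d2 by (auto simp: d_def dist_norm norm_minus_commute)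
      show "QQ zb + ereal (inner v (w - zb) - e * norm (w - zb)) \<le> QQ w"
      proof (cases "g w = \<infinity>")
        case True thus ?thesis by (simp add: QQ_in[OF wD])
      next
        case False
        obtain Gw where Gw: "g w = ereal Gw" using False g_nonneginf by (rule ereal_split)
        define dd where "dd = w - zb"
        have pi: "g zb + ereal (norm (zb - x)^2 / (2*\<gamma>)) \<le> g w + ereal (norm (w - x)^2 / (2*\<gamma>))"
          using zb by (intro prox_ineq) (simp add: Tmu_def x_def)
        hence pr: "Gb + norm p^2 / (2*\<gamma>) \<le> Gw + norm (w - x)^2 / (2*\<gamma>)" by (simp add: Gb Gw p_def)
        have "norm (w - x)^2 = inner (dd + p) (dd + p)"
          by (simp only: power2_norm_eq_inner) (simp add: dd_def p_def)
        also have "\<dots> = norm dd ^2 + 2 * inner dd p + norm p ^2"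
          by (simp add: inner_add_left inner_add_right inner_commute power2_norm_eq_inner)
        finally have "norm (w - x)^2 / (2*\<gamma>) = norm dd^2/(2*\<gamma>) + inner dd p / \<gamma> + norm p^2/(2*\<gamma>)"
          using \<gamma> by (simp add: field_simps)
        hence g1: "Gb - norm dd^2/(2*\<gamma>) - inner dd p / \<gamma> \<le> Gw" using pr by linarith
        have nd: "norm dd < \<gamma> * e" using w by (simp add: dd_def d_def)
        have "norm dd^2/(2*\<gamma>) = norm dd * (norm dd / (2*\<gamma>))" by (simp add: power2_eq_square)
        also have "\<dots> \<le> norm dd * (e/2)"
          using nd \<gamma> by (intro mult_left_mono) (auto simp: field_simps)
        finally have g2: "norm dd^2/(2*\<gamma>) \<le> e/2 * norm dd" by (simp add: mult.commute)
        have "norm (phi w - phi zb - inner (GG zb) dd) \<le> e/2 * norm dd"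
          using d1(2)[of w] w by (simp add: dd_def d_def)
        hence "\<bar>phi w - phi zb - inner (GG zb) dd\<bar> \<le> e/2 * norm dd" by (simp only: real_norm_def)
        hence "-(phi w - phi zb - inner (GG zb) dd) \<le> e/2 * norm dd" by (rule abs_le_D2)
        hence p1: "phi zb + inner (GG zb) dd - e/2 * norm dd \<le> phi w" by linarith
        have iv: "inner v dd = inner (GG zb) dd - inner dd p / \<gamma>"
          by (simp add: v inner_diff_left inner_diff_right inner_commute)
        have "phi zb + Gb + (inner v dd - e * norm dd) \<le> phi w + Gw"
          using g1 g2 p1 iv by linarith
        thus ?thesis by (simp add: Qzb QQ_in[OF wD] Gw dd_def)
      qed
    qed
    thus "\<exists>\<delta>>0. \<forall>w. norm (w - zb) < \<delta> \<longrightarrow> QQ zb + ereal (inner v (w - zb) - e * norm (w - zb)) \<le> QQ w"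
      using d by blast
  qed
  thus ?thesis by (simp add: v_def)
qed

lemma ereal_minus_le_self: "r \<ge> 0 \<Longrightarrow> (a::ereal) - ereal r \<le> a"
  by (cases a) auto

lemma step_Ret: "\<not> ipfb_step f df g c dc m b db \<mu> \<epsilon> \<alpha> \<beta> (Ret zs) s'"
  by (auto elim: ipfb_step.cases)

lemma step_Cont:
  assumes "ipfb_step f df g c dc m b db \<mu> \<epsilon> \<alpha> \<beta> (Cont \<gamma> z) s'"
  shows "(s' = Cont (\<beta> * \<gamma>) z \<and> (\<exists>zb. zb \<in> Tmu df g c dc m db \<mu> \<gamma> z \<and> \<not> ipfb_accept f df g c dc m b db \<mu> \<alpha> \<gamma> z zb))
    \<or> (\<exists>zb. s' = Ret zb \<and> zb \<in> Tmu df g c dc m db \<mu> \<gamma> z \<and> ipfb_accept f df g c dc m b db \<mu> \<alpha> \<gamma> z zb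
          \<and> ipfb_residual df c dc m db \<mu> \<gamma> z zb \<le> \<epsilon>)
    \<or> (\<exists>zb. s' = Cont \<gamma> zb \<and> zb \<in> Tmu df g c dc m db \<mu> \<gamma> z \<and> ipfb_accept f df g c dc m b db \<mu> \<alpha> \<gamma> z zb
          \<and> \<not> ipfb_residual df c dc m db \<mu> \<gamma> z zb \<le> \<epsilon>)"
  using assms by (cases rule: ipfb_step.cases) auto

lemma QQ_z0: "QQ z0 \<noteq> \<infinity>"
proof -
  have "z0 \<in> DD" using z0_F by (simp add: DD_def)
  thus ?thesis using z0_F by (cases "g z0") (auto simp: QQ_in)
qed

fun inv :: "'a ipfb_state \<Rightarrow> bool" where
  "inv (Cont \<gamma> z) = (0 < \<gamma> \<and> \<gamma> \<le> \<gamma>0 \<and> QQ z \<le> QQ z0)"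
| "inv (Ret zs) = (QQ zs \<le> QQ z0 \<and> frechet_subdiff QQ zs \<noteq> {} \<and> infdist 0 (frechet_subdiff QQ zs) \<le> \<epsilon>)"

lemma accept_QQ:
  assumes "ipfb_accept f df g c dc m b db \<mu> \<alpha> \<gamma> z zb" "0 < \<gamma>"
  shows "QQ zb \<le> QQ z"
proof -
  have "QQ zb \<le> QQ z - ereal ((1 - \<alpha>) / (2 * \<gamma>) * norm (zb - z) ^ 2)"
    using assms by (simp add: ipfb_accept_def)
  also have "\<dots> \<le> QQ z" using assms alpha by (intro ereal_minus_le_self) simp
  finally show ?thesis .
qed

lemma inv_step:
  assumes "inv s" "ipfb_step f df g c dc m b db \<mu> \<epsilon> \<alpha> \<beta> s s'"
  shows "inv s'"
proof (cases s)
  case (Ret zs) thus ?thesis using assms step_Ret by simp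
next
  case (Cont \<gamma> z)
  have I: "0 < \<gamma>" "\<gamma> \<le> \<gamma>0" "QQ z \<le> QQ z0" using assms(1) Cont by auto
  from step_Cont[OF assms(2)[unfolded Cont]] show ?thesis
  proof (elim disjE exE conjE)
    assume "s' = Cont (\<beta> * \<gamma>) z"
    moreover have "\<beta> * \<gamma> \<le> \<gamma>" using beta I by (simp add: mult_le_cancel_right1)
    ultimately show ?thesis using I beta by (auto intro: order_trans[of _ \<gamma>])
  next
    fix zb assume s': "s' = Ret zb" and zb: "zb \<in> Tmu df g c dc m db \<mu> \<gamma> z"
      and acc: "ipfb_accept f df g c dc m b db \<mu> \<alpha> \<gamma> z zb"
      and res: "ipfb_residual df c dc m db \<mu> \<gamma> z zb \<le> \<epsilon>"
    have Q: "QQ zb \<le> QQ z0" using accept_QQ[OF acc I(1)] I by simp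
    hence "QQ zb \<noteq> \<infinity>" using QQ_z0 by auto
    hence zbD: "zb \<in> DD" and gzb: "g zb \<noteq> \<infinity>" using QQ_finite by auto
    have vin: "(1/\<gamma>) *\<^sub>R (z - zb) - GG z + GG zb \<in> frechet_subdiff QQ zb"
      by (rule subdiff_ret[OF zb I(1) zbD gzb])
    have "infdist 0 (frechet_subdiff QQ zb) \<le> dist 0 ((1/\<gamma>) *\<^sub>R (z - zb) - GG z + GG zb)"
      by (rule infdist_le[OF vin])
    also have "\<dots> \<le> \<epsilon>" using res by (simp add: ipfb_residual_def dist_0_norm)
    finally show ?thesis using s' Q vin by auto
  next
    fix zb assume s': "s' = Cont \<gamma> zb" and acc: "ipfb_accept f df g c dc m b db \<mu> \<alpha> \<gamma> z zb"
    have "QQ zb \<le> QQ z0" using accept_QQ[OF acc I(1)] I by simp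
    thus ?thesis using s' I by simp
  qed
qed

lemma inv_reach:
  assumes "(ipfb_step f df g c dc m b db \<mu> \<epsilon> \<alpha> \<beta>)\<^sup>*\<^sup>* (Cont \<gamma>0 z0) s"
  shows "inv s"
  using assms
proof (induction rule: rtranclp_induct)
  case base thus ?case using gamma0 by simp
next
  case (step y z) thus ?case using inv_step by blast
qed

lemma progress:
  assumes "inv (Cont \<gamma> z)"
  shows "\<exists>s'. ipfb_step f df g c dc m b db \<mu> \<epsilon> \<alpha> \<beta> (Cont \<gamma> z) s'"
proof -
  have "0 < \<gamma>" "\<gamma> \<le> \<gamma>0" using assms by auto
  then obtain zb where zb: "zb \<in> Tmu df g c dc m db \<mu> \<gamma> z" using Tmu_nonempty by blast
  show ?thesis
  proof (cases "ipfb_accept f df g c dc m b db \<mu> \<alpha> \<gamma> z zb")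
    case True
    show ?thesis
    proof (cases "ipfb_residual df c dc m db \<mu> \<gamma> z zb \<le> \<epsilon>")
      case True thus ?thesis using zb \<open>ipfb_accept _ _ _ _ _ _ _ _ _ _ _ _ _\<close> by (blast intro: ipfb_step.return)
    next
      case False thus ?thesis using zb \<open>ipfb_accept _ _ _ _ _ _ _ _ _ _ _ _ _\<close> by (blast intro: ipfb_step.continue)
    qed
  next
    case False thus ?thesis using zb by (blast intro: ipfb_step.backtrack)
  qed
qed

end

context ipfb begin

definition "cc = (1 - \<alpha>) * \<epsilon>^2 / (2 * (1 + \<alpha>)^2)"
definition "Cc = 1 / cc + 1 / (1 - \<alpha>)"

lemma cc_pos: "cc > 0" using alpha eps_pos by (simp add: cc_def)
lemma Cc_pos: "Cc \<ge> 0" using cc_pos alpha by (simp add: Cc_def)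

lemma lower_bound_fg: "\<exists>Q. \<forall>z\<in>DD. ereal Q \<le> ereal (f z) + g z"
proof -
  define I where "I = (INF x\<in>{x. \<forall>i<m. c i x \<le> 0}. ereal (f x) + g x)"
  have "I \<noteq> \<infinity>" "I \<noteq> -\<infinity>" using inf_finite by (auto simp: I_def)
  then obtain Q where Q: "I = ereal Q" by (cases I) auto
  have "ereal Q \<le> ereal (f z) + g z" if z: "z \<in> DD" for z
    unfolding Q[symmetric] I_def using z by (intro INF_lower) (auto simp: DD_def less_imp_le)
  thus ?thesis by blast
qed

lemma QQ_real:
  assumes "QQ z \<noteq> \<infinity>"
  shows "z \<in> DD" "g z \<noteq> \<infinity>" "QQ z = ereal (phi z + real_of_ereal (g z))"
proof -
  show zD: "z \<in> DD" and gz: "g z \<noteq> \<infinity>" using QQ_finite[OF assms] by auto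
  obtain G where G: "g z = ereal G" using gz g_nonneginf by (rule ereal_split)
  show "QQ z = ereal (phi z + real_of_ereal (g z))" by (simp add: QQ_in[OF zD] G)
qed

lemma cont_descent:
  assumes acc: "ipfb_accept f df g c dc m b db \<mu> \<alpha> \<gamma> z zb"
    and res: "\<not> ipfb_residual df c dc m db \<mu> \<gamma> z zb \<le> \<epsilon>" and \<gamma>: "0 < \<gamma>"
    and Qz: "QQ z = ereal \<Phi>z" and Qb: "QQ zb = ereal \<Phi>b"
  shows "\<Phi>b \<le> \<Phi>z - cc * \<gamma>" "norm (zb - z) \<le> Cc * (\<Phi>z - \<Phi>b)"
proof -
  define n where "n = norm (zb - z)"
  have n0: "n \<ge> 0" by (simp add: n_def)
  have a1: "\<Phi>b \<le> \<Phi>z - (1 - \<alpha>) / (2 * \<gamma>) * n^2"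
    using acc by (simp add: ipfb_accept_def Qz Qb n_def)
  have a2: "norm (GG zb - GG z) \<le> \<alpha> / \<gamma> * n" using acc by (simp add: ipfb_accept_def n_def)
  have "\<epsilon> < norm ((1 / \<gamma>) *\<^sub>R (z - zb) - GG z + GG zb)" using res by (simp add: ipfb_residual_def)
  also have "\<dots> \<le> norm ((1 / \<gamma>) *\<^sub>R (z - zb)) + norm (GG zb - GG z)"
    using norm_triangle_ineq[of "(1 / \<gamma>) *\<^sub>R (z - zb)" "GG zb - GG z"] by (simp add: algebra_simps)
  also have "norm ((1 / \<gamma>) *\<^sub>R (z - zb)) = n / \<gamma>" using \<gamma> by (simp add: n_def norm_minus_commute)
  finally have "\<epsilon> < n / \<gamma> + \<alpha> / \<gamma> * n" using a2 by linarith
  hence "\<epsilon> * \<gamma> < (1 + \<alpha>) * n" using \<gamma> by (simp add: field_simps)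
  hence nlb: "\<epsilon> * \<gamma> / (1 + \<alpha>) < n" using alpha by (simp add: field_simps)
  have "(\<epsilon> * \<gamma> / (1 + \<alpha>))^2 \<le> n^2"
    using nlb eps_pos \<gamma> alpha by (intro power_mono) auto
  hence "(1 - \<alpha>) / (2 * \<gamma>) * (\<epsilon> * \<gamma> / (1 + \<alpha>))^2 \<le> (1 - \<alpha>) / (2 * \<gamma>) * n^2"
    using alpha \<gamma> by (intro mult_left_mono) auto
  moreover have "(1 - \<alpha>) / (2 * \<gamma>) * (\<epsilon> * \<gamma> / (1 + \<alpha>))^2 = cc * \<gamma>"
  proof -
    define A where "A = (1 + \<alpha>)^2"
    have A: "A > 0" using alpha by (simp add: A_def)
    have e1: "(\<epsilon> * \<gamma> / (1 + \<alpha>))^2 = \<epsilon>^2 * \<gamma>^2 / A" by (simp add: A_def power_divide power_mult_distrib)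
    have e2: "cc = (1 - \<alpha>) * \<epsilon>^2 / (2 * A)" by (simp add: cc_def A_def)
    show ?thesis unfolding e1 e2 using \<gamma> A by (simp add: field_simps power2_eq_square)
  qed
  ultimately have cg: "cc * \<gamma> \<le> (1 - \<alpha>) / (2 * \<gamma>) * n^2" by simp
  thus "\<Phi>b \<le> \<Phi>z - cc * \<gamma>" using a1 by linarith
  define D where "D = \<Phi>z - \<Phi>b"
  have D1: "(1 - \<alpha>) / (2 * \<gamma>) * n^2 \<le> D" using a1 by (simp add: D_def)
  have D2: "\<gamma> \<le> D / cc" using cg D1 cc_pos by (simp add: field_simps)
  have "n^2 \<le> 2 * \<gamma> * (D / (1 - \<alpha>))"
  proof -
    have "(1 - \<alpha>) * n^2 \<le> 2 * \<gamma> * D" using D1 \<gamma> alpha by (simp add: field_simps)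
    thus ?thesis using alpha by (simp add: field_simps)
  qed
  also have "\<dots> \<le> (\<gamma> + D / (1 - \<alpha>))^2"
  proof -
    have "0 \<le> \<gamma>^2 + (D / (1 - \<alpha>))^2" by simp
    thus ?thesis by (simp add: power2_eq_square algebra_simps)
  qed
  finally have sq: "n^2 \<le> (\<gamma> + D / (1 - \<alpha>))^2" .
  have "0 \<le> (1 - \<alpha>) / (2 * \<gamma>) * n^2" using alpha \<gamma> by simp
  hence "D \<ge> 0" using D1 by linarith
  hence "0 \<le> D / (1 - \<alpha>)" using alpha by simp
  hence "0 \<le> \<gamma> + D / (1 - \<alpha>)" using \<gamma> by linarith
  hence "n \<le> \<gamma> + D / (1 - \<alpha>)" using power2_le_imp_le[OF sq] by blast
  also have "\<dots> \<le> D / cc + D / (1 - \<alpha>)" using D2 by simp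
  also have "\<dots> = Cc * D" by (simp add: Cc_def algebra_simps)
  finally show "norm (zb - z) \<le> Cc * (\<Phi>z - \<Phi>b)" by (simp add: n_def D_def)
qed

end

context ipfb begin

abbreviation "STEP \<equiv> ipfb_step f df g c dc m b db \<mu> \<epsilon> \<alpha> \<beta>"

lemma no_inf_run: "\<not> (\<exists>s. s 0 = Cont \<gamma>0 z0 \<and> (\<forall>k. STEP (s k) (s (Suc k))))"
proof
  assume "\<exists>s. s 0 = Cont \<gamma>0 z0 \<and> (\<forall>k. STEP (s k) (s (Suc k)))"
  then obtain s where s0: "s 0 = Cont \<gamma>0 z0" and st: "\<And>k. STEP (s k) (s (Suc k))" by blast
  have reach: "STEP\<^sup>*\<^sup>* (Cont \<gamma>0 z0) (s k)" for k
  proof (induction k)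
    case 0 thus ?case by (simp add: s0)
  next
    case (Suc k) thus ?case using st[of k] by (rule rtranclp.rtrancl_into_rtrancl)
  qed
  have inv: "inv (s k)" for k using inv_reach[OF reach] .
  define gam where "gam k = (case s k of Cont \<gamma> z \<Rightarrow> \<gamma> | Ret z \<Rightarrow> 0)" for k
  define zz where "zz k = (case s k of Cont \<gamma> z \<Rightarrow> z | Ret z \<Rightarrow> z)" for k
  have sk: "s k = Cont (gam k) (zz k)" for k
  proof (cases "s k")
    case (Ret zs) thus ?thesis using st[of k] step_Ret by simp
  next
    case (Cont \<gamma> z) thus ?thesis by (simp add: gam_def zz_def)
  qed
  have I: "0 < gam k" "gam k \<le> \<gamma>0" "QQ (zz k) \<le> QQ z0" for k using inv[of k] sk[of k] by auto
  have fin: "QQ (zz k) \<noteq> \<infinity>" for k using I(3)[of k] QQ_z0 by auto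
  define \<Phi> where "\<Phi> k = phi (zz k) + real_of_ereal (g (zz k))" for k
  have Qk: "QQ (zz k) = ereal (\<Phi> k)" for k using QQ_real(3)[OF fin] by (simp add: \<Phi>_def)
  have zD: "zz k \<in> DD" for k using QQ_real(1)[OF fin] .
  have z0: "zz 0 = z0" using s0 sk[of 0] by simp
  have \<Phi>le: "\<Phi> k \<le> \<Phi> 0" for k using I(3)[of k] Qk[of k] Qk[of 0] z0 by simp
  obtain Q where Q: "\<And>z. z \<in> DD \<Longrightarrow> ereal Q \<le> ereal (f z) + g z" using lower_bound_fg by blast
  have sumb: "Q + \<mu> * (\<Sum>i<m. b (c i (zz k))) \<le> \<Phi> k" for k
  proof -
    have gfin: "g (zz k) \<noteq> \<infinity>" using QQ_real(2)[OF fin] .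
    obtain G where G: "g (zz k) = ereal G" using gfin g_nonneginf by (rule ereal_split)
    have "Q \<le> f (zz k) + G" using Q[OF zD[of k]] by (simp add: G)
    thus ?thesis by (simp add: \<Phi>_def phi_def G)
  qed
  have \<Phi>Q: "Q \<le> \<Phi> k" for k
  proof -
    have "0 \<le> (\<Sum>i<m. b (c i (zz k)))" using zD[of k] b_nonneg by (intro sum_nonneg) (auto simp: DD_def)
    thus ?thesis using sumb[of k] mu_pos by (smt (verit) mult_nonneg_nonneg)
  qed
  have stepk: "(zz (Suc k) = zz k \<and> gam (Suc k) = \<beta> * gam k \<and>
       (\<exists>zb. zb \<in> Tmu df g c dc m db \<mu> (gam k) (zz k) \<and> \<not> ipfb_accept f df g c dc m b db \<mu> \<alpha> (gam k) (zz k) zb))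
    \<or> (gam (Suc k) = gam k \<and> ipfb_accept f df g c dc m b db \<mu> \<alpha> (gam k) (zz k) (zz (Suc k))
       \<and> \<not> ipfb_residual df c dc m db \<mu> (gam k) (zz k) (zz (Suc k)) \<le> \<epsilon>)" for k
    using step_Cont[OF st[of k, unfolded sk[of k]]] sk[of "Suc k"] by auto
  have dec: "\<Phi> (Suc k) \<le> \<Phi> k \<and> norm (zz (Suc k) - zz k) \<le> Cc * (\<Phi> k - \<Phi> (Suc k))" for k
    using stepk[of k]
  proof (elim disjE conjE)
    assume "zz (Suc k) = zz k" thus ?thesis by (simp add: \<Phi>_def)
  next
    assume acc: "ipfb_accept f df g c dc m b db \<mu> \<alpha> (gam k) (zz k) (zz (Suc k))"
      and res: "\<not> ipfb_residual df c dc m db \<mu> (gam k) (zz k) (zz (Suc k)) \<le> \<epsilon>"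
    note cd = cont_descent[OF acc res I(1) Qk Qk]
    thus ?thesis using cc_pos I(1)[of k] by (smt (verit) mult_pos_pos)
  qed
  have psum: "(\<Sum>k<n. norm (zz (Suc k) - zz k)) \<le> Cc * (\<Phi> 0 - \<Phi> n)" for n
  proof (induction n)
    case 0 thus ?case by simp
  next
    case (Suc n)
    thus ?case using dec[of n] by (simp add: algebra_simps)
  qed
  have "summable (\<lambda>k. norm (zz (Suc k) - zz k))"
  proof (rule summableI_nonneg_bounded)
    fix n
    have "Cc * (\<Phi> 0 - \<Phi> n) \<le> Cc * (\<Phi> 0 - Q)" using \<Phi>Q[of n] Cc_pos by (intro mult_left_mono) auto
    thus "(\<Sum>k<n. norm (zz (Suc k) - zz k)) \<le> Cc * (\<Phi> 0 - Q)" using psum[of n] by linarith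
  qed simp
  hence "summable (\<lambda>k. zz (Suc k) - zz k)" by (rule summable_norm_cancel)
  hence "(\<lambda>n. \<Sum>k<n. zz (Suc k) - zz k) \<longlonglongrightarrow> (\<Sum>k. zz (Suc k) - zz k)" by (rule summable_LIMSEQ)
  hence "(\<lambda>n. zz 0 + (\<Sum>k<n. zz (Suc k) - zz k)) \<longlonglongrightarrow> zz 0 + (\<Sum>k. zz (Suc k) - zz k)"
    by (intro tendsto_intros)
  moreover have "zz 0 + (\<Sum>k<n. zz (Suc k) - zz k) = zz n" for n
    by (simp add: sum_lessThan_telescope)
  ultimately have lim: "zz \<longlonglongrightarrow> zz 0 + (\<Sum>k. zz (Suc k) - zz k)" by simp
  define zs where "zs = zz 0 + (\<Sum>k. zz (Suc k) - zz k)"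
  have lim: "zz \<longlonglongrightarrow> zs" using lim by (simp add: zs_def)
  define M where "M = (\<Phi> 0 - Q) / \<mu>"
  have "eventually (\<lambda>t. M + 1 \<le> b t) (at_left 0)" using b_blowup by (simp add: filterlim_at_top)
  then obtain t0 :: real where t0: "t0 < 0" "\<And>t. t0 < t \<Longrightarrow> t < 0 \<Longrightarrow> M + 1 \<le> b t"
    unfolding eventually_at_left_field by blast
  have cb: "c i (zz k) \<le> t0" if i: "i < m" for i k
  proof (rule ccontr)
    assume "\<not> c i (zz k) \<le> t0"
    moreover have "c i (zz k) < 0" using zD[of k] i by (simp add: DD_def)
    ultimately have "M + 1 \<le> b (c i (zz k))" using t0 by simp
    moreover have "b (c i (zz k)) \<le> (\<Sum>i<m. b (c i (zz k)))"
      using i zD[of k] b_nonneg by (intro member_le_sum) (auto simp: DD_def)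
    moreover have "\<mu> * (\<Sum>i<m. b (c i (zz k))) \<le> \<Phi> 0 - Q" using sumb[of k] \<Phi>le[of k] by linarith
    hence "(\<Sum>i<m. b (c i (zz k))) \<le> M" using mu_pos by (simp add: M_def field_simps)
    ultimately show False by linarith
  qed
  have zsD: "zs \<in> DD"
  proof -
    have "c i zs \<le> t0" if i: "i < m" for i
    proof (rule LIMSEQ_le_const2)
      show "(\<lambda>k. c i (zz k)) \<longlonglongrightarrow> c i zs"
        by (rule isCont_tendsto_compose[OF has_derivative_continuous[OF c_grad[OF i]] lim])
      show "\<exists>N. \<forall>n\<ge>N. c i (zz n) \<le> t0" using cb[OF i] by blast
    qed
    thus ?thesis using t0(1) unfolding DD_def by (auto intro: le_less_trans)
  qed
  obtain r \<gamma>b where r: "r > 0" "\<gamma>b > 0" and U0: "\<forall>z \<gamma> zb. norm (z - zs) < r \<longrightarrow> QQ z \<le> ereal (\<Phi> 0) \<longrightarrow> 0 < \<gamma>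
      \<longrightarrow> \<gamma> \<le> \<gamma>b \<longrightarrow> zb \<in> Tmu df g c dc m db \<mu> \<gamma> z \<longrightarrow> ipfb_accept f df g c dc m b db \<mu> \<alpha> \<gamma> z zb"
    using uniform_accept[OF zsD, of "\<Phi> 0"] by (elim exE conjE) (rule that)
  note U = U0[rule_format]
  obtain N where N: "\<And>k. k \<ge> N \<Longrightarrow> norm (zz k - zs) < r" using lim r unfolding LIMSEQ_iff by blast
  have bt_big: "gam k > \<gamma>b" if k: "k \<ge> N" and bt: "zb \<in> Tmu df g c dc m db \<mu> (gam k) (zz k)"
      "\<not> ipfb_accept f df g c dc m b db \<mu> \<alpha> (gam k) (zz k) zb" for k zb
  proof (rule ccontr)
    assume "\<not> gam k > \<gamma>b"
    hence "ipfb_accept f df g c dc m b db \<mu> \<alpha> (gam k) (zz k) zb"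
      using U[OF N[OF k] _ I(1) _ bt(1)] Qk[of k] \<Phi>le[of k] by simp
    thus False using bt(2) by simp
  qed
  define gmin where "gmin = min (gam N) (\<beta> * \<gamma>b)"
  have gmin: "gmin > 0" using I(1)[of N] r beta by (simp add: gmin_def)
  have glow: "gmin \<le> gam (N + j)" for j
  proof (induction j)
    case 0 thus ?case by (simp add: gmin_def)
  next
    case (Suc j)
    from stepk[of "N + j"] show ?case
    proof (elim disjE conjE exE)
      fix zb assume g: "gam (Suc (N + j)) = \<beta> * gam (N + j)"
        and bt: "zb \<in> Tmu df g c dc m db \<mu> (gam (N + j)) (zz (N + j))"
          "\<not> ipfb_accept f df g c dc m b db \<mu> \<alpha> (gam (N + j)) (zz (N + j)) zb"
      have "\<gamma>b < gam (N + j)" using bt_big[OF _ bt] by simp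
      hence "\<beta> * \<gamma>b \<le> \<beta> * gam (N + j)" using beta by simp
      thus ?case using g by (simp add: gmin_def)
    next
      assume "gam (Suc (N + j)) = gam (N + j)"
      thus ?case using Suc.IH by simp
    qed
  qed
  define dd where "dd = min (1 - \<beta>) cc * gmin"
  have dd: "dd > 0" using beta cc_pos gmin by (simp add: dd_def)
  have dd1: "dd \<le> (1 - \<beta>) * gam (N + j)" for j
    unfolding dd_def using glow[of j] gmin beta by (intro mult_mono) auto
  have dd2: "dd \<le> cc * gam (N + j)" for j
    unfolding dd_def using glow[of j] gmin cc_pos by (intro mult_mono) auto
  have Pdec: "\<Phi> (N + j) + gam (N + j) \<le> \<Phi> N + gam N - real j * dd" for j
  proof (induction j)
    case 0 thus ?case by simp
  next
    case (Suc j)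
    have "\<Phi> (Suc (N + j)) + gam (Suc (N + j)) \<le> \<Phi> (N + j) + gam (N + j) - dd"
      using stepk[of "N + j"]
    proof (elim disjE conjE)
      assume "zz (Suc (N + j)) = zz (N + j)" "gam (Suc (N + j)) = \<beta> * gam (N + j)"
      thus ?thesis using dd1[of j] by (simp add: \<Phi>_def algebra_simps)
    next
      assume g: "gam (Suc (N + j)) = gam (N + j)"
        and acc: "ipfb_accept f df g c dc m b db \<mu> \<alpha> (gam (N + j)) (zz (N + j)) (zz (Suc (N + j)))"
        and res: "\<not> ipfb_residual df c dc m db \<mu> (gam (N + j)) (zz (N + j)) (zz (Suc (N + j))) \<le> \<epsilon>"
      have "\<Phi> (Suc (N + j)) \<le> \<Phi> (N + j) - cc * gam (N + j)"
        by (rule cont_descent(1)[OF acc res I(1) Qk Qk])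
      thus ?thesis using g dd2[of j] by simp
    qed
    thus ?case using Suc.IH by (simp add: algebra_simps)
  qed
  obtain j where j: "\<Phi> N + gam N - Q < real j * dd" using ex_less_of_nat_mult[OF dd] by blast
  have "Q < \<Phi> (N + j) + gam (N + j)" using \<Phi>Q[of "N + j"] I(1)[of "N + j"] by simp
  thus False using Pdec[of j] j by simp
qed

end

theorem main_result:
  fixes f :: "'a::euclidean_space \<Rightarrow> real" and df :: "'a \<Rightarrow> 'a"
    and g :: "'a \<Rightarrow> ereal"
    and m :: nat and c :: "nat \<Rightarrow> 'a \<Rightarrow> real" and dc :: "nat \<Rightarrow> 'a \<Rightarrow> 'a"
    and b db d2b :: "real \<Rightarrow> real"
    and z0 :: 'a and \<mu> \<epsilon> \<gamma>0 \<alpha> \<beta> :: real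
  assumes "ipfb f df g m c dc b db d2b z0 \<mu> \<epsilon> \<gamma>0 \<alpha> \<beta>"
  shows
    "\<not> (\<exists>s. s 0 = Cont \<gamma>0 z0 \<and> (\<forall>k. ipfb_step f df g c dc m b db \<mu> \<epsilon> \<alpha> \<beta> (s k) (s (Suc k))))
     \<and> (\<forall>\<gamma> z. (ipfb_step f df g c dc m b db \<mu> \<epsilon> \<alpha> \<beta>)\<^sup>*\<^sup>* (Cont \<gamma>0 z0) (Cont \<gamma> z) \<longrightarrow>
           (\<exists>s'. ipfb_step f df g c dc m b db \<mu> \<epsilon> \<alpha> \<beta> (Cont \<gamma> z) s'))
     \<and> (\<forall>zs. (ipfb_step f df g c dc m b db \<mu> \<epsilon> \<alpha> \<beta>)\<^sup>*\<^sup>* (Cont \<gamma>0 z0) (Ret zs) \<longrightarrow>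
           frechet_subdiff (qmu f g c m b \<mu>) zs \<noteq> {}
           \<and> infdist 0 (frechet_subdiff (qmu f g c m b \<mu>) zs) \<le> \<epsilon>
           \<and> qmu f g c m b \<mu> zs \<le> qmu f g c m b \<mu> z0)"
proof -
  interpret ipfb f df g m c dc b db d2b z0 \<mu> \<epsilon> \<gamma>0 \<alpha> \<beta> by (rule assms)
  show ?thesis
  proof (intro conjI allI impI)
    show "\<not> (\<exists>s. s 0 = Cont \<gamma>0 z0 \<and> (\<forall>k. ipfb_step f df g c dc m b db \<mu> \<epsilon> \<alpha> \<beta> (s k) (s (Suc k))))"
      by (rule no_inf_run)
  next
    fix \<gamma> z assume "(ipfb_step f df g c dc m b db \<mu> \<epsilon> \<alpha> \<beta>)\<^sup>*\<^sup>* (Cont \<gamma>0 z0) (Cont \<gamma> z)"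
    thus "\<exists>s'. ipfb_step f df g c dc m b db \<mu> \<epsilon> \<alpha> \<beta> (Cont \<gamma> z) s'"
      using inv_reach progress by blast
  next
    fix zs assume R: "(ipfb_step f df g c dc m b db \<mu> \<epsilon> \<alpha> \<beta>)\<^sup>*\<^sup>* (Cont \<gamma>0 z0) (Ret zs)"
    have "inv (Ret zs)" by (rule inv_reach[OF R])
    thus "frechet_subdiff (qmu f g c m b \<mu>) zs \<noteq> {}"
      "infdist 0 (frechet_subdiff (qmu f g c m b \<mu>) zs) \<le> \<epsilon>"
      "qmu f g c m b \<mu> zs \<le> qmu f g c m b \<mu> z0" by auto
  qed
qed

theorem corollary3p6:
  fixes f :: "'a::euclidean_space \<Rightarrow> real" and df :: "'a \<Rightarrow> 'a"
    and g :: "'a \<Rightarrow> ereal"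
    and m :: nat and c :: "nat \<Rightarrow> 'a \<Rightarrow> real" and dc :: "nat \<Rightarrow> 'a \<Rightarrow> 'a"
    and b db d2b :: "real \<Rightarrow> real"
    and z0 :: 'a and \<mu> \<epsilon> \<gamma>0 \<alpha> \<beta> :: real
  assumes f_grad: "\<And>x. (f has_derivative (\<lambda>h. inner (df x) h)) (at x)"
    and f_lip: "locally_lipschitz df"
    and g_nonneginf: "\<And>x. g x \<noteq> -\<infinity>"
    and g_proper: "\<exists>x. g x \<noteq> \<infinity>"
    and g_lsc: "lsc g"
    and g_proxbdd: "prox_bounded g"
    and g_cont: "cont_rel_dom g"
    and c_grad: "\<And>i x. i < m \<Longrightarrow> (c i has_derivative (\<lambda>h. inner (dc i x) h)) (at x)"
    and c_lip: "\<And>i. i < m \<Longrightarrow> locally_lipschitz (dc i)"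
    and inf_finite: "\<bar>(INF x\<in>{x. \<forall>i<m. c i x \<le> 0}. ereal (f x) + g x)\<bar> \<noteq> \<infinity>"
    and F_nonempty: "\<exists>x. g x \<noteq> \<infinity> \<and> (\<forall>i<m. c i x < 0)"
    and b_nonneg: "\<And>t. t < 0 \<Longrightarrow> b t \<ge> 0"
    and b_deriv: "\<And>t. t < 0 \<Longrightarrow> (b has_real_derivative db t) (at t)"
    and db_deriv: "\<And>t. t < 0 \<Longrightarrow> (db has_real_derivative d2b t) (at t)"
    and d2b_cont: "continuous_on {..<0} d2b"
    and db_pos: "\<And>t. t < 0 \<Longrightarrow> db t > 0"
    and b_blowup: "filterlim b at_top (at_left 0)"
    and z0_F: "g z0 \<noteq> \<infinity>" "\<forall>i<m. c i z0 < 0"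
    and mu_pos: "\<mu> > 0" and eps_pos: "\<epsilon> > 0"
    and gamma0: "\<gamma>0 > 0" "ereal \<gamma>0 < gamma_g g"
    and alpha: "0 < \<alpha>" "\<alpha> < 1"
    and beta: "0 < \<beta>" "\<beta> < 1"
  shows
    "\<not> (\<exists>s. s 0 = Cont \<gamma>0 z0 \<and> (\<forall>k. ipfb_step f df g c dc m b db \<mu> \<epsilon> \<alpha> \<beta> (s k) (s (Suc k))))
     \<and> (\<forall>\<gamma> z. (ipfb_step f df g c dc m b db \<mu> \<epsilon> \<alpha> \<beta>)\<^sup>*\<^sup>* (Cont \<gamma>0 z0) (Cont \<gamma> z) \<longrightarrow>
           (\<exists>s'. ipfb_step f df g c dc m b db \<mu> \<epsilon> \<alpha> \<beta> (Cont \<gamma> z) s'))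
     \<and> (\<forall>zs. (ipfb_step f df g c dc m b db \<mu> \<epsilon> \<alpha> \<beta>)\<^sup>*\<^sup>* (Cont \<gamma>0 z0) (Ret zs) \<longrightarrow>
           frechet_subdiff (qmu f g c m b \<mu>) zs \<noteq> {}
           \<and> infdist 0 (frechet_subdiff (qmu f g c m b \<mu>) zs) \<le> \<epsilon>
           \<and> qmu f g c m b \<mu> zs \<le> qmu f g c m b \<mu> z0)"
proof -
  have I: "ipfb f df g m c dc b db d2b z0 \<mu> \<epsilon> \<gamma>0 \<alpha> \<beta>"
    by (rule ipfb.intro; fact assms)
  show ?thesis by (rule main_result[OF I])
qed

end
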